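(* Let $\bm A\in\mathbb R^{m\times n}$, $\bm D\in\mathbb R^{n\times d}$ with $\bm D\bm D^\top=\bm I_n$, $0<\alpha\le1$, $\lambda>0$, $\mu>0$, let $s\ge2$ be an integer, and let $\bm b=\bm A\bm x+\bm e$ with $\bm x\in\mathbb R^n$, $\|\bm e\|_2\le\lambda$. Let $T$ be an index set of $s$ largest-magnitude entries of $\bm D^\top\bm x$, and let $(\hat{\bm x},\hat{\bm z})$ be a minimizer of $$\min_{\bm x\in\mathbb R^n,\ \bm z\in\mathbb R^d}\ \lambda(\|\bm z\|_1-\alpha\|\bm z\|_2)+\tfrac12\|\bm A\bm x-\bm b\|_2^2+\tfrac{\mu}2\|\bm D^\top\bm x-\bm z\|_2^2.$$ Set $K=\sqrt{\frac{\alpha+\sqrt s}{\sqrt s}+\frac{\alpha^2}{4s}}+\frac{\alpha+1}{2\sqrt s}+1$ and $W=2\|\bm D_{T^c}^\top\bm x\|_1+\frac{(\alpha+1)^2d}{2}\frac{\lambda}{\mu}$. (i) Let $t\ge3$ be real and suppose $\rho:=\rho_{s,t}=\delta_{ts}+\sqrt{\frac{\lceil(t-1)s\rceil}{(t-1)^2s}}\frac{(\sqrt2+1)(\sqrt s+\alpha)}{\sqrt2(\sqrt s-1)}\theta_{ts,(t-1)s}<1$. Set $\delta:=\delta_{ts}$, $\tau=\frac{(\sqrt2+1)\theta_{ts,(t-1)s}}{\sqrt2(1-\rho)}\frac{\sqrt{(t-1)s}}{(t-1)(s-\sqrt s)}$, $C=1+\frac{(\sqrt2+1)\theta_{ts,(t-1)s}}{\sqrt2(1-\rho)}\frac{\sqrt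 s+\alpha}{s-\sqrt s}\frac{\sqrt{(t-1)s}}{t-1}$, $Q=C(1-\rho)+(\sqrt s+\alpha)\sqrt{1+\delta}$. Then $$\|\hat{\bm x}-\bm x\|_2\le\Big(K\Big(\tau+\frac{(\tau(1-\rho)+\sqrt{1+\delta})C}{Q}\Big)+\frac12\Big(1+\frac{C(1-\rho)}{Q}\Big)\Big)W+\Big(K\frac{\tau(1-\rho)+\sqrt{1+\delta}}{1-\rho}+\frac12\Big)\Big(C+\frac{(\sqrt s+\alpha)\sqrt{1+\delta}}{1-\rho}\Big)2\lambda.$$ (ii) Suppose instead $\rho:=\rho_s=\delta_s+\frac{(\sqrt2+1)(\sqrt s+\alpha)}{\sqrt2(\sqrt s-1)}\theta_{s,s}<1$, and set $\delta:=\delta_s$, $\tau=\frac{(\sqrt2+1)\theta_{s,s}}{\sqrt2(1-\rho)}\frac1{\sqrt s-1}$, $C=1+\frac{(\sqrt2+1)\theta_{s,s}}{\sqrt2(1-\rho)}\frac{\sqrt s+\alpha}{\sqrt s-1}$, $Q=C(1-\rho)+(\sqrt s+\alpha)\sqrt{1+\delta}$. Then the same bound as in (i) holds with these $\rho,\delta,\tau,C,Q$.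
   Context: For an index set $S\subseteq\{1,\dots,d\}$, $S^c$ is its complement and $\bm D_S$ denotes $\bm D$ with all columns not indexed by $S$ set to zero (so $\bm D_{T^c}^\top\bm x$ is $\bm D^\top\bm x$ with entries in $T$ set to zero). A vector is $s$-sparse if it has at most $s$ nonzero entries. $\delta_s$ (the $\bm D$-RIC) is the smallest $\delta\ge0$ with $(1-\delta)\|\bm D\bm v\|_2^2\le\|\bm A\bm D\bm v\|_2^2\le(1+\delta)\|\bm D\bm v\|_2^2$ for all $s$-sparse $\bm v\in\mathbb R^d$; $\theta_{s,t}$ (the $\bm D$-ROC) is the smallest nonnegative number with $|\langle\bm A\bm D\bm u,\bm A\bm D\bm v\rangle-\langle\bm D\bm u,\bm D\bm v\rangle|\le\theta_{s,t}\|\bm u\|_2\|\bm v\|_2$ for all $s$-sparse $\bm u$ and $t$-sparse $\bm v$ in $\mathbb R^d$. For non-integer orders, $\delta_{ts}:=\delta_{\lceil ts\rceil}$ and $\theta_{ts,(t-1)s}:=\theta_{\lceil ts\rceil,\lceil(t-1)s\rceil}$. *)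

theory Defs
  imports "HOL-Analysis.Analysis"
begin

definition sparse :: "nat \<Rightarrow> real^'d \<Rightarrow> bool" where
  "sparse s v \<longleftrightarrow> card {i. v $ i \<noteq> 0} \<le> s"

definition norm1 :: "real^'d \<Rightarrow> real" where
  "norm1 v = (\<Sum>i\<in>UNIV. \<bar>v $ i\<bar>)"

definition Dcols :: "'d set \<Rightarrow> real^'d^'n \<Rightarrow> real^'d^'n" where
  "Dcols S D = (\<chi> i j. if j \<in> S then D $ i $ j else 0)"

definition DRIC :: "real^'n^'m \<Rightarrow> real^'d^'n \<Rightarrow> nat \<Rightarrow> real" where
  "DRIC A D s = Inf {\<delta>. \<delta> \<ge> 0 \<and> (\<forall>v. sparse s v \<longrightarrow>
      (1 - \<delta>) * (norm (D *v v))^2 \<le> (norm (A *v (D *v v)))^2 \<and>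
      (norm (A *v (D *v v)))^2 \<le> (1 + \<delta>) * (norm (D *v v))^2)}"

definition DROC :: "real^'n^'m \<Rightarrow> real^'d^'n \<Rightarrow> nat \<Rightarrow> nat \<Rightarrow> real" where
  "DROC A D s t = Inf {\<theta>. \<theta> \<ge> 0 \<and> (\<forall>u v. sparse s u \<and> sparse t v \<longrightarrow>
      \<bar>inner (A *v (D *v u)) (A *v (D *v v)) - inner (D *v u) (D *v v)\<bar> \<le> \<theta> * norm u * norm v)}"

definition objective :: "real \<Rightarrow> real \<Rightarrow> real \<Rightarrow> real^'n^'m \<Rightarrow> real^'d^'n \<Rightarrow> real^'m
    \<Rightarrow> real^'n \<Rightarrow> real^'d \<Rightarrow> real" where
  "objective lam \<alpha> \<mu> A D b x z =
     lam * (norm1 z - \<alpha> * norm z) + 1/2 * (norm (A *v x - b))^2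
     + \<mu>/2 * (norm (transpose D *v x - z))^2"

definition err_bound :: "real \<Rightarrow> real \<Rightarrow> real \<Rightarrow> real \<Rightarrow> real \<Rightarrow> real \<Rightarrow> real
    \<Rightarrow> real \<Rightarrow> real \<Rightarrow> real \<Rightarrow> real" where
  "err_bound s \<alpha> lam K W \<rho> \<delta> \<tau> C Q =
     (K * (\<tau> + (\<tau> * (1 - \<rho>) + sqrt (1 + \<delta>)) * C / Q) + 1/2 * (1 + C * (1 - \<rho>) / Q)) * W
     + (K * (\<tau> * (1 - \<rho>) + sqrt (1 + \<delta>)) / (1 - \<rho>) + 1/2)
       * (C + (sqrt s + \<alpha>) * sqrt (1 + \<delta>) / (1 - \<rho>)) * 2 * lam"

end

theory Submission
  imports Defs
begin


definition rv :: "'d set \<Rightarrow> real^'d \<Rightarrow> real^'d" where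
  "rv B v = (\<chi> i. if i \<in> B then v $ i else 0)"

lemma rv_nth[simp]: "rv B v $ i = (if i \<in> B then v $ i else 0)"
  by (simp add: rv_def)

lemma norm_sq_vec: "(norm (v::real^'d))^2 = (\<Sum>i\<in>UNIV. (v $ i)^2)"
  by (simp add: norm_vec_def L2_set_def sum_nonneg)

lemma norm_sq_rv: "(norm (rv B v))^2 = (\<Sum>i\<in>B. (v $ i)^2)"
proof -
  have "(norm (rv B v))^2 = (\<Sum>i\<in>UNIV. (if i \<in> B then (v $ i)^2 else 0))"
    unfolding norm_sq_vec by (rule sum.cong) auto
  also have "\<dots> = (\<Sum>i\<in>B. (v $ i)^2)"
    by (simp add: sum.If_cases Int_absorb1)
  finally show ?thesis .
qed

lemma norm1_rv: "norm1 (rv B v) = (\<Sum>i\<in>B. \<bar>v $ i\<bar>)"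
proof -
  have "norm1 (rv B v) = (\<Sum>i\<in>UNIV. (if i \<in> B then \<bar>v $ i\<bar> else 0))"
    unfolding norm1_def by (rule sum.cong) auto
  also have "\<dots> = (\<Sum>i\<in>B. \<bar>v $ i\<bar>)"
    by (simp add: sum.If_cases Int_absorb1)
  finally show ?thesis .
qed

lemma rv_split: "rv B v + rv (- B) v = v"
  by (simp add: vec_eq_iff)

lemma rv_UNIV[simp]: "rv UNIV v = v" by (simp add: vec_eq_iff)

lemma sparse_rv: "card B \<le> k \<Longrightarrow> sparse k (rv B v)"
proof -
  assume "card B \<le> k"
  have "{i. rv B v $ i \<noteq> 0} \<subseteq> B" by auto
  then have "card {i. rv B v $ i \<noteq> 0} \<le> card B" by (simp add: card_mono)
  with \<open>card B \<le> k\<close> show ?thesis unfolding sparse_def by simp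
qed

lemma norm1_nonneg: "norm1 v \<ge> 0" unfolding norm1_def by (simp add: sum_nonneg)

lemma norm1_add: "norm1 (a + b) \<le> norm1 a + norm1 b"
  unfolding norm1_def by (simp add: sum.distrib[symmetric] sum_mono abs_triangle_ineq)

lemma norm1_scale: "norm1 (c *\<^sub>R a) = \<bar>c\<bar> * norm1 a"
  unfolding norm1_def by (simp add: sum_distrib_left abs_mult)

lemma norm1_diff: "norm1 (a - b) = norm1 (b - a)"
  unfolding norm1_def by (simp add: abs_minus_commute)

lemma CS_sum: "finite B \<Longrightarrow> (\<Sum>i\<in>B. \<bar>f i\<bar>) \<le> sqrt (card B) * sqrt (\<Sum>i\<in>B. (f i)^2)"
proof -
  have "(\<Sum>i\<in>B. \<bar>f i\<bar> * \<bar>(\<lambda>_. 1::real) i\<bar>) \<le> L2_set f B * L2_set (\<lambda>_. 1::real) B"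
    by (rule L2_set_mult_ineq)
  then show ?thesis by (simp add: L2_set_def L2_set_constant mult.commute)
qed

lemma norm1_le_sqrt_card: "norm1 (v::real^'d) \<le> sqrt CARD('d) * norm v"
  using CS_sum[of UNIV "\<lambda>i. v $ i"] unfolding norm1_def
  by (simp add: norm_vec_def L2_set_def)

lemma norm_le_norm1: "norm (v::real^'d) \<le> norm1 v"
  unfolding norm1_def norm_vec_def using L2_set_le_sum_abs[of "\<lambda>i. \<bar>v$i\<bar>" UNIV] by simp

lemma inner_Dt: "inner (D *v z) y = inner z (transpose D *v (y::real^'n))"
  for D :: "real^'d^'n"
  by (metis dot_lmul_matrix inner_commute transpose_matrix_vector)

lemma DDt_apply: "D ** transpose D = mat 1 \<Longrightarrow> D *v (transpose D *v y) = (y::real^'n)" for D :: "real^'d^'n"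
  by (simp only: matrix_vector_mul_assoc) simp

lemma norm_Dt: fixes D :: "real^'d^'n" assumes "D ** transpose D = mat 1"
  shows "norm (transpose D *v y) = norm y"
proof -
  have "inner (transpose D *v y) (transpose D *v y) = inner y y"
    using inner_Dt[of D "transpose D *v y" y] DDt_apply[OF assms] by (simp add: inner_commute)
  then show ?thesis by (simp add: norm_eq_sqrt_inner)
qed

lemma norm_D_le: fixes D :: "real^'d^'n" assumes "D ** transpose D = mat 1"
  shows "norm (D *v z) \<le> norm z"
proof -
  have "(norm (D *v z))^2 = inner z (transpose D *v (D *v z))"
    using inner_Dt[of D z "D *v z"] by (simp add: power2_norm_eq_inner)
  also have "\<dots> \<le> norm z * norm (transpose D *v (D *v z))" by (rule norm_cauchy_schwarz)
  also have "\<dots> = norm z * norm (D *v z)" using norm_Dt[OF assms] by simp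
  finally have "(norm (D *v z))^2 \<le> norm z * norm (D *v z)" .
  then show ?thesis by (cases "norm (D *v z) = 0") (auto simp: power2_eq_square)
qed

lemma Inf_bound:
  fixes S :: "real set"
  assumes "S \<noteq> {}" "\<And>d. d \<in> S \<Longrightarrow> X \<le> d * q" "q \<ge> 0"
  shows "X \<le> Inf S * q"
proof (cases "q = 0")
  case True
  from assms(1) obtain d where "d \<in> S" by auto
  with assms(2) True show ?thesis by fastforce
next
  case False
  then have q: "q > 0" using assms(3) by simp
  have "X / q \<le> Inf S"
    by (rule cInf_greatest[OF assms(1)]) (use assms(2) q in \<open>simp add: divide_le_eq\<close>)
  then show ?thesis using q by (simp add: divide_le_eq)
qed

lemma Inf_nonneg:
  fixes S :: "real set"
  assumes "S \<noteq> {}" "\<And>d. d \<in> S \<Longrightarrow> d \<ge> 0"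
  shows "Inf S \<ge> 0"
  using assms by (intro cInf_greatest) auto

lemma matrix_bound: "\<exists>B>0. \<forall>x. norm ((A::real^'n^'m) *v x) \<le> B * norm x"
proof -
  have "bounded_linear (\<lambda>x. A *v x)" by simp
  then obtain B where "B > 0" "\<And>x. norm (A *v x) \<le> norm x * B"
    using bounded_linear.pos_bounded by blast
  then show ?thesis by (metis mult.commute)
qed

lemma DRIC_props:
  fixes A :: "real^'n^'m" and D :: "real^'d^'n"
  assumes DDt: "D ** transpose D = mat 1"
  shows "DRIC A D k \<ge> 0"
    and "sparse k v \<Longrightarrow> (1 - DRIC A D k) * (norm (D *v v))^2 \<le> (norm (A *v (D *v v)))^2"
    and "sparse k v \<Longrightarrow> (norm (A *v (D *v v)))^2 \<le> (1 + DRIC A D k) * (norm (D *v v))^2"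
proof -
  define S where "S = {\<delta>. \<delta> \<ge> 0 \<and> (\<forall>v. sparse k v \<longrightarrow>
      (1 - \<delta>) * (norm (D *v v))^2 \<le> (norm (A *v (D *v v)))^2 \<and>
      (norm (A *v (D *v v)))^2 \<le> (1 + \<delta>) * (norm (D *v v))^2)}"
  have Sdef: "DRIC A D k = Inf S" unfolding S_def DRIC_def by simp
  obtain B where B: "B > 0" "\<And>x. norm (A *v x) \<le> B * norm x" using matrix_bound by blast
  have "max 1 (B^2) \<in> S"
  proof -
    { fix v :: "real^'d"
      have "(1 - max 1 (B^2)) * (norm (D *v v))^2 \<le> 0"
        by (intro mult_nonpos_nonneg) auto
      also have "0 \<le> (norm (A *v (D *v v)))^2" by simp
      finally have 1: "(1 - max 1 (B^2)) * (norm (D *v v))^2 \<le> (norm (A *v (D *v v)))^2" .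
      have "norm (A *v (D *v v)) \<le> B * norm (D *v v)" by (rule B(2))
      then have "(norm (A *v (D *v v)))^2 \<le> (B * norm (D *v v))^2"
        by (intro power_mono) auto
      also have "\<dots> = B^2 * (norm (D *v v))^2" by (simp add: power_mult_distrib)
      also have "\<dots> \<le> (1 + max 1 (B^2)) * (norm (D *v v))^2"
        by (intro mult_right_mono) auto
      finally have "(1 - max 1 (B^2)) * (norm (D *v v))^2 \<le> (norm (A *v (D *v v)))^2 \<and>
         (norm (A *v (D *v v)))^2 \<le> (1 + max 1 (B^2)) * (norm (D *v v))^2" using 1 by simp }
    then show ?thesis unfolding S_def by auto
  qed
  then have ne: "S \<noteq> {}" by auto
  show "DRIC A D k \<ge> 0" unfolding Sdef by (rule Inf_nonneg[OF ne]) (auto simp: S_def)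
  assume sp: "sparse k v"
  {
    have "(norm (D *v v))^2 - (norm (A *v (D *v v)))^2 \<le> Inf S * (norm (D *v v))^2"
      by (rule Inf_bound[OF ne]) (use sp in \<open>auto simp: S_def algebra_simps\<close>)
    then show "(1 - DRIC A D k) * (norm (D *v v))^2 \<le> (norm (A *v (D *v v)))^2"
      unfolding Sdef by (simp add: algebra_simps)
  }
  {
    have "(norm (A *v (D *v v)))^2 - (norm (D *v v))^2 \<le> Inf S * (norm (D *v v))^2"
      by (rule Inf_bound[OF ne]) (use sp in \<open>auto simp: S_def algebra_simps\<close>)
    then show "(norm (A *v (D *v v)))^2 \<le> (1 + DRIC A D k) * (norm (D *v v))^2"
      unfolding Sdef by (simp add: algebra_simps)
  }
qed

lemma DROC_props:
  fixes A :: "real^'n^'m" and D :: "real^'d^'n"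
  assumes DDt: "D ** transpose D = mat 1"
  shows "DROC A D k l \<ge> 0"
    and "sparse k u \<Longrightarrow> sparse l v \<Longrightarrow>
      \<bar>inner (A *v (D *v u)) (A *v (D *v v)) - inner (D *v u) (D *v v)\<bar> \<le> DROC A D k l * (norm u * norm v)"
proof -
  define S where "S = {\<theta>. \<theta> \<ge> 0 \<and> (\<forall>u v. sparse k u \<and> sparse l v \<longrightarrow>
      \<bar>inner (A *v (D *v u)) (A *v (D *v v)) - inner (D *v u) (D *v v)\<bar> \<le> \<theta> * norm u * norm v)}"
  have Sdef: "DROC A D k l = Inf S" unfolding S_def DROC_def by simp
  obtain B where B: "B > 0" "\<And>x. norm (A *v x) \<le> B * norm x" using matrix_bound by blast
  have "B^2 + 1 \<in> S"
  proof -
    { fix u v :: "real^'d"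
      have "\<bar>inner (A *v (D *v u)) (A *v (D *v v)) - inner (D *v u) (D *v v)\<bar>
          \<le> \<bar>inner (A *v (D *v u)) (A *v (D *v v))\<bar> + \<bar>inner (D *v u) (D *v v)\<bar>" by simp
      also have "\<dots> \<le> norm (A *v (D *v u)) * norm (A *v (D *v v)) + norm (D *v u) * norm (D *v v)"
        by (intro add_mono Cauchy_Schwarz_ineq2)
      also have "\<dots> \<le> (B * norm u) * (B * norm v) + norm u * norm v"
      proof (intro add_mono mult_mono)
        show "norm (A *v (D *v u)) \<le> B * norm u"
          using B(2)[of "D *v u"] norm_D_le[OF DDt, of u] B(1) by (meson mult_left_mono less_imp_le order_trans)
        show "norm (A *v (D *v v)) \<le> B * norm v"
          using B(2)[of "D *v v"] norm_D_le[OF DDt, of v] B(1) by (meson mult_left_mono less_imp_le order_trans)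
      qed (use norm_D_le[OF DDt] B(1) in auto)
      also have "\<dots> = (B^2 + 1) * norm u * norm v" by (simp add: algebra_simps power2_eq_square)
      finally have "\<bar>inner (A *v (D *v u)) (A *v (D *v v)) - inner (D *v u) (D *v v)\<bar> \<le> (B^2 + 1) * norm u * norm v" . }
    then show ?thesis unfolding S_def by (auto intro: add_nonneg_nonneg)
  qed
  then have ne: "S \<noteq> {}" by auto
  show "DROC A D k l \<ge> 0" unfolding Sdef by (rule Inf_nonneg[OF ne]) (auto simp: S_def)
  assume sp: "sparse k u" "sparse l v"
  show "\<bar>inner (A *v (D *v u)) (A *v (D *v v)) - inner (D *v u) (D *v v)\<bar> \<le> DROC A D k l * (norm u * norm v)"
    unfolding Sdef by (rule Inf_bound[OF ne]) (use sp in \<open>auto simp: S_def mult.assoc\<close>)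
qed




lemma exists_top:
  fixes f :: "'d::finite \<Rightarrow> real"
  shows "k \<le> card U \<Longrightarrow> \<exists>B\<subseteq>U. card B = k \<and> (\<forall>i\<in>B. \<forall>j\<in>U-B. \<bar>f j\<bar> \<le> \<bar>f i\<bar>)"
proof (induction k)
  case 0
  then show ?case by (intro exI[of _ "{}"]) auto
next
  case (Suc k)
  then obtain B where B: "B \<subseteq> U" "card B = k" "\<forall>i\<in>B. \<forall>j\<in>U-B. \<bar>f j\<bar> \<le> \<bar>f i\<bar>" by auto
  have fin: "finite (U - B)" by simp
  have "card (U - B) > 0" using Suc.prems B by (simp add: card_Diff_subset)
  then have ne: "U - B \<noteq> {}" by (metis card.empty less_irrefl)
  define mx where "mx = Max ((\<lambda>l. \<bar>f l\<bar>) ` (U - B))"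
  have "mx \<in> (\<lambda>l. \<bar>f l\<bar>) ` (U - B)" unfolding mx_def using ne by (intro Max_in) auto
  then obtain j where j1: "j \<in> U - B" "\<bar>f j\<bar> = mx" by auto
  have "\<forall>l\<in>U-B. \<bar>f l\<bar> \<le> mx" unfolding mx_def by auto
  with j1 have j: "j \<in> U - B" "\<forall>l\<in>U-B. \<bar>f l\<bar> \<le> \<bar>f j\<bar>" by auto
  show ?case
  proof (intro exI[of _ "insert j B"] conjI)
    show "insert j B \<subseteq> U" using B j by auto
    show "card (insert j B) = Suc k" using B j by (simp add: finite_subset)
    show "\<forall>i\<in>insert j B. \<forall>l\<in>U - insert j B. \<bar>f l\<bar> \<le> \<bar>f i\<bar>" using B(3) j by auto
  qed
qed

lemma CWX:
  fixes f :: "'d \<Rightarrow> real"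
  assumes fin: "finite B" and kpos: "k > 0" and cardB: "card B \<le> k"
    and bnd: "\<And>i. i \<in> B \<Longrightarrow> m \<le> \<bar>f i\<bar> \<and> \<bar>f i\<bar> \<le> M"
    and m0: "0 \<le> m" "m \<le> M" and short: "card B < k \<Longrightarrow> m = 0"
  shows "sqrt (\<Sum>i\<in>B. (f i)^2) \<le> (\<Sum>i\<in>B. \<bar>f i\<bar>) / sqrt k + sqrt k * (M - m) / 4"
proof -
  define S1 where "S1 = (\<Sum>i\<in>B. \<bar>f i\<bar>)"
  define r where "r = sqrt k"
  have r: "r > 0" "r^2 = k" using kpos by (auto simp: r_def)
  have pt: "(f i)^2 \<le> (M + m) * \<bar>f i\<bar> - M * m" if "i \<in> B" for i
  proof -
    have "(\<bar>f i\<bar> - m) * (M - \<bar>f i\<bar>) \<ge> 0" using bnd[OF that] by simp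
    then show ?thesis by (simp add: algebra_simps power2_eq_square)
  qed
  have "(\<Sum>i\<in>B. (f i)^2) \<le> (\<Sum>i\<in>B. (M + m) * \<bar>f i\<bar> - M * m)"
    by (rule sum_mono) (rule pt)
  also have "\<dots> = (M + m) * S1 - card B * (M * m)"
    by (simp add: S1_def sum_subtractf sum_distrib_left)
  finally have Q: "(\<Sum>i\<in>B. (f i)^2) \<le> (M + m) * S1 - card B * (M * m)" .
  have S1nn: "S1 \<ge> 0" by (simp add: S1_def sum_nonneg)
  have key: "(M + m) * S1 - card B * (M * m) \<le> (S1 / r + r * (M - m) / 4)^2"
  proof (cases "card B < k")
    case True
    then have "m = 0" by (rule short)
    have "(S1 / r + r * (M - m) / 4)^2 - (M + m) * S1 + card B * (M * m) = (S1 / r - r * M / 4)^2"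
      using r \<open>m = 0\<close> by (simp add: field_simps power2_eq_square)
    then show ?thesis by (smt (verit) zero_le_power2)
  next
    case False
    then have cB: "real (card B) = r * r" using cardB r by (simp add: power2_eq_square)
    have "(S1 / r + r * (M - m) / 4)^2 - ((M + m) * S1 - card B * (M * m))
        = (S1 / r - r * (M + 3 * m) / 4)^2 + r^2 * m * (M - m) / 2"
      unfolding cB using r(1) by (simp add: field_simps power2_eq_square)
    moreover have "r^2 * m * (M - m) / 2 \<ge> 0" using m0 by simp
    ultimately show ?thesis by (smt (verit) zero_le_power2)
  qed
  have rhs: "S1 / r + r * (M - m) / 4 \<ge> 0" using S1nn r m0 by simp
  have "sqrt (\<Sum>i\<in>B. (f i)^2) \<le> sqrt ((S1 / r + r * (M - m) / 4)^2)"
    using Q key by (intro real_sqrt_le_mono) linarith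
  also have "\<dots> = S1 / r + r * (M - m) / 4" using rhs by simp
  finally show ?thesis by (simp add: S1_def r_def)
qed

lemma rv_norm_sqrt: "norm (rv B v) = sqrt (\<Sum>i\<in>B. (v $ i)^2)"
  by (metis norm_ge_zero norm_sq_rv real_sqrt_unique)

lemma arith_tail: "c*(a/r + r*(M-m)/4) + c*(b/r + r*m/4) = c*((a+b)/r + r*M/4)" for a b c r M m :: real
  by (simp add: add_divide_distrib diff_divide_distrib ring_distribs)

lemma tail_bound:
  fixes E :: "real^'d \<Rightarrow> real" and v :: "real^'d"
  assumes add: "\<And>a b. E (a + b) = E a + E b"
    and blk: "\<And>B. card B \<le> k \<Longrightarrow> \<bar>E (rv B v)\<bar> \<le> c * norm (rv B v)"
    and c: "c \<ge> 0" and k: "k > 0"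
  shows "(\<forall>i\<in>U. \<bar>v$i\<bar> \<le> M) \<Longrightarrow> 0 \<le> M \<Longrightarrow>
     \<bar>E (rv U v)\<bar> \<le> c * (norm1 (rv U v) / sqrt k + sqrt k * M / 4)"
proof (induction "card U" arbitrary: U M rule: less_induct)
  case less
  show ?case
  proof (cases "card U \<le> k")
    case True
    have "\<bar>E (rv U v)\<bar> \<le> c * norm (rv U v)" by (rule blk[OF True])
    also have "norm (rv U v) \<le> norm1 (rv U v) / sqrt k + sqrt k * (M - 0) / 4"
      unfolding rv_norm_sqrt norm1_rv
      by (rule CWX) (use True k less.prems in auto)
    finally show ?thesis using c by (simp add: mult_left_mono)
  next
    case False
    then obtain B where B: "B \<subseteq> U" "card B = k" "\<forall>i\<in>B. \<forall>j\<in>U-B. \<bar>v$j\<bar> \<le> \<bar>v$i\<bar>"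
      using exists_top[of k U "\<lambda>i. v$i"] by auto
    have Bne: "B \<noteq> {}" using B(2) k by auto
    define m where "m = Min ((\<lambda>i. \<bar>v$i\<bar>) ` B)"
    have "m \<in> (\<lambda>i. \<bar>v$i\<bar>) ` B" unfolding m_def using Bne by (intro Min_in) auto
    then obtain i0 where i0: "i0 \<in> B" "\<bar>v$i0\<bar> = m" by auto
    have mle: "\<And>i. i \<in> B \<Longrightarrow> m \<le> \<bar>v$i\<bar>" unfolding m_def by auto
    have m0: "0 \<le> m" using i0 by auto
    have mM: "m \<le> M" using i0 B(1) less.prems by auto
    have tailm: "\<forall>j\<in>U-B. \<bar>v$j\<bar> \<le> m" using B(3) i0 by auto
    have cardlt: "card (U - B) < card U"
      using B(1) B(2) False k by (simp add: card_Diff_subset)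
    have IH: "\<bar>E (rv (U - B) v)\<bar> \<le> c * (norm1 (rv (U - B) v) / sqrt k + sqrt k * m / 4)"
      using less.hyps[OF cardlt] tailm m0 by blast
    have blkB: "\<bar>E (rv B v)\<bar> \<le> c * (norm1 (rv B v) / sqrt k + sqrt k * (M - m) / 4)"
    proof -
      have "\<bar>E (rv B v)\<bar> \<le> c * norm (rv B v)" using blk B(2) by simp
      also have "norm (rv B v) \<le> norm1 (rv B v) / sqrt k + sqrt k * (M - m) / 4"
        unfolding rv_norm_sqrt norm1_rv
        by (rule CWX) (use B less.prems mle m0 mM k in auto)
      finally show ?thesis using c by (simp add: mult_left_mono)
    qed
    have split: "rv U v = rv B v + rv (U - B) v" using B(1) by (auto simp: vec_eq_iff)
    have n1: "norm1 (rv U v) = norm1 (rv B v) + norm1 (rv (U - B) v)"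
      unfolding norm1_rv using B(1) by (simp add: sum.subset_diff)
    have "\<bar>E (rv U v)\<bar> \<le> \<bar>E (rv B v)\<bar> + \<bar>E (rv (U - B) v)\<bar>" unfolding split add by simp
    also have "\<dots> \<le> c * (norm1 (rv B v) / sqrt k + sqrt k * (M - m) / 4) + c * (norm1 (rv (U - B) v) / sqrt k + sqrt k * m / 4)"
      using blkB IH by simp
    also have "\<dots> = c * (norm1 (rv U v) / sqrt k + sqrt k * M / 4)"
      unfolding n1 by (rule arith_tail)
    finally show ?thesis .
  qed
qed




lemma quad_bound:
  fixes \<eta> l B E :: real
  assumes "\<eta>^2 \<le> l * B * \<eta> + l * E" "l > 0" "B > 0" "E \<ge> 0" "\<eta> \<ge> 0"
  shows "\<eta> \<le> l * B + E / B"
proof (rule ccontr)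
  assume "\<not> ?thesis"
  then have g: "\<eta> - l * B > E / B" by simp
  have "l * B * (\<eta> - l * B) > l * B * (E / B)" using g assms by (intro mult_strict_left_mono) auto
  also have "l * B * (E / B) = l * E" using assms by simp
  finally have 1: "l * B * (\<eta> - l * B) > l * E" .
  have "\<eta>^2 - l * B * \<eta> = (\<eta> - l * B)^2 + l * B * (\<eta> - l * B)" by (simp add: algebra_simps power2_eq_square)
  then have "\<eta>^2 - l * B * \<eta> > l * E" using 1 by (smt (verit) zero_le_power2)
  with assms(1) show False by simp
qed

lemma eb_ident:
  fixes K \<tau> sd r C Q P W l :: real
  assumes "r \<noteq> 0" "Q \<noteq> 0"
  shows "(K * \<tau> + 1/2) * W + (K * \<tau> + K * (sd/r) + 1/2)  *  (C * r * W/Q + 2 * l * (C + P * (sd/r)))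
   = (K * (\<tau> + (\<tau> * r + sd) * C/Q) + 1/2 * (1 + C * r/Q)) * W + (K * (\<tau> * r+sd)/r + 1/2) * (C + P * sd/r) * 2 * l"
  using assms by (simp add: field_simps)

lemma final_chain:
  fixes N a g \<eta> W l K \<tau> c C \<rho> \<delta> Q P s \<alpha> :: real
  assumes N: "N \<le> K * a + g / 2" and a: "a \<le> \<tau> * g + c * \<eta>" and g: "g = W + \<eta>"
    and quad: "\<eta>^2 - l * \<eta> \<le> l * (W + P * a)"
    and P: "P = sqrt s + \<alpha>" "P \<ge> 0"
    and C: "C = 1 + P * \<tau>" and c: "c = sqrt (1 + \<delta>) / (1 - \<rho>)"
    and Q: "Q = C * (1 - \<rho>) + P * sqrt (1 + \<delta>)"
    and rho: "\<rho> < 1" and delta: "\<delta> \<ge> 0" and K: "K \<ge> 0" and tau: "\<tau> \<ge> 0"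
    and W: "W \<ge> 0" and l: "l > 0" and eta: "\<eta> \<ge> 0"
  shows "N \<le> err_bound s \<alpha> l K W \<rho> \<delta> \<tau> C Q"
proof -
  define sd where "sd = sqrt (1 + \<delta>)"
  have sd: "sd \<ge> 1" unfolding sd_def using delta by simp
  have r1: "1 - \<rho> > 0" using rho by simp
  have c0: "c \<ge> 0" using c r1 sd sd_def by simp
  have C1: "C \<ge> 1" using C P tau by simp
  define B where "B = C + P * c"
  have "P * c \<ge> 0" using P c0 by simp
  then have B0: "B > 0" using C1 unfolding B_def by linarith
  have "P * a \<le> P * (\<tau> * g + c * \<eta>)" using a P by (simp add: mult_left_mono)
  then have "l * (W + P * a) \<le> l * (W + P * (\<tau> * (W + \<eta>) + c * \<eta>))"
    using l g by (intro mult_left_mono) auto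
  then have "\<eta>^2 - l * \<eta> \<le> l * (W + P * (\<tau> * (W + \<eta>) + c * \<eta>))"
    using quad by linarith
  also have "\<dots> = l * (C * W) + l * (B - 1) * \<eta>" unfolding B_def C by (simp add: algebra_simps)
  finally have "\<eta>^2 \<le> l * B * \<eta> + l * (C * W)" by (simp add: algebra_simps)
  then have eb: "\<eta> \<le> l * B + C * W / B" using quad_bound[of \<eta> l B "C * W"] l B0 C1 W eta by simp
  have BQ: "B * (1 - \<rho>) = Q" unfolding B_def Q c sd_def using r1 by (simp add: field_simps)
  have Qpos: "Q > 0" using BQ B0 r1 by (metis mult_pos_pos)
  define es where "es = C * (1 - \<rho>) * W / Q + 2 * l * B"
  have "C * W / B = C * (1 - \<rho>) * W / Q" unfolding BQ[symmetric] using r1 B0 by (simp add: field_simps)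
  moreover have "l * B > 0" using l B0 by simp
  ultimately have ees: "\<eta> \<le> es" unfolding es_def using eb by linarith
  have "K * a \<le> K * (\<tau> * g + c * \<eta>)" using a K by (rule mult_left_mono)
  then have "N \<le> K * (\<tau> * (W + \<eta>) + c * \<eta>) + (W + \<eta>) / 2"
    using N g by simp
  also have "\<dots> = (K * \<tau> + 1/2) * W + (K * \<tau> + K * c + 1/2) * \<eta>" by (simp add: algebra_simps)
  also have "\<dots> \<le> (K * \<tau> + 1/2) * W + (K * \<tau> + K * c + 1/2) * es"
    using ees K tau c0 by (intro add_left_mono mult_left_mono) auto
  also have "\<dots> = err_bound s \<alpha> l K W \<rho> \<delta> \<tau> C Q"
    unfolding err_bound_def es_def B_def c sd_def[symmetric] P(1)[symmetric]
    using eb_ident[where K=K and \<tau>=\<tau> and sd=sd and r="1 - \<rho>" and C=C and Q=Q and P=P and W=W and l=l] r1 Qpos by simp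
  finally show ?thesis .
qed




lemma small_eps:
  fixes L M :: real
  assumes "\<And>\<epsilon>. 0 < \<epsilon> \<Longrightarrow> \<epsilon> < 1 \<Longrightarrow> 0 \<le> L + \<epsilon> * M"
  shows "0 \<le> L"
proof (rule ccontr)
  assume "\<not> 0 \<le> L"
  then have L: "L < 0" by simp
  define \<epsilon> where "\<epsilon> = min (1/2) (- L / (2 * (\<bar>M\<bar> + 1)))"
  have p: "0 < - L / (2 * (\<bar>M\<bar> + 1))" using L by (intro divide_pos_pos) auto
  have e0: "0 < \<epsilon>" "\<epsilon> < 1" using p unfolding \<epsilon>_def by auto
  have "\<epsilon> * M \<le> \<epsilon> * \<bar>M\<bar>" using e0 by (simp add: mult_left_mono)
  also have "\<dots> \<le> - L / (2 * (\<bar>M\<bar> + 1)) * \<bar>M\<bar>" unfolding \<epsilon>_def by (intro mult_right_mono) auto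
  also have "\<dots> \<le> - L / 2"
  proof -
    have "\<bar>M\<bar> / (\<bar>M\<bar> + 1) \<le> 1" by simp
    then have "(- L / 2) * (\<bar>M\<bar> / (\<bar>M\<bar> + 1)) \<le> (- L / 2) * 1" using L by (intro mult_left_mono) auto
    then show ?thesis by (simp add: field_simps)
  qed
  finally have "L + \<epsilon> * M < 0" using L by simp
  with assms[OF e0] show False by simp
qed

lemma amgm_quad: "(a::real) * t - m * t^2 \<le> a^2 / (4 * m)" if "m > 0" for t
proof -
  have "0 \<le> (a - 2 * m * t)^2" by simp
  then have "4 * m * (a * t - m * t^2) \<le> a^2" by (simp add: algebra_simps power2_eq_square)
  then show ?thesis using that by (simp add: field_simps)
qed

lemma opt_ineq:
  fixes A :: "real^'n^'m" and D :: "real^'d^'n"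
    and \<alpha> lam \<mu> :: real
    and x :: "real^'n" and e :: "real^'m" and b :: "real^'m"
    and xh :: "real^'n" and zh :: "real^'d"
  assumes DDt: "D ** transpose D = mat 1"
    and alpha: "0 \<le> \<alpha>"
    and lam: "lam > 0" and mu: "\<mu> > 0"
    and b: "b = A *v x + e" and e: "norm e \<le> lam"
    and minimizer: "\<forall>x' z'. objective lam \<alpha> \<mu> A D b xh zh \<le> objective lam \<alpha> \<mu> A D b x' z'"
  shows "(norm (A *v (xh - x)))^2 - lam * norm (A *v (xh - x)) \<le>
     lam * (norm1 (transpose D *v x) - norm1 (transpose D *v xh) + \<alpha> * norm (xh - x)
            + (1 + \<alpha>)^2 * CARD('d) * lam / (2 * \<mu>))"
proof -
  define h where "h = xh - x"
  define q where "q = A *v h"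
  define r where "r = A *v xh - b"
  define u where "u = transpose D *v x"
  define y where "y = transpose D *v xh"
  define w where "w = y - zh"
  define X where "X = norm1 u - norm1 zh + \<alpha> * norm (u - zh)"
  define Rf where "Rf = (\<lambda>z::real^'d. norm1 z - \<alpha> * norm z)"
  have rq: "r = q - e" unfolding r_def q_def h_def b by (simp add: matrix_vector_mult_diff_distrib)
  have key: "0 \<le> lam * X - inner r q - \<mu> * (norm w)^2 + \<epsilon> * ((norm q)^2 / 2 + \<mu> * (norm w)^2 / 2)"
    if e0: "0 < \<epsilon>" "\<epsilon> < 1" for \<epsilon>
  proof -
    define x' where "x' = xh - \<epsilon> *\<^sub>R h"
    define z' where "z' = zh + \<epsilon> *\<^sub>R (u - zh)"
    have ax: "A *v x' - b = r - \<epsilon> *\<^sub>R q"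
      unfolding x'_def r_def q_def by (simp add: matrix_vector_mult_diff_distrib matrix_vector_mult_scaleR)
    have dx: "transpose D *v x' - z' = (1 - \<epsilon>) *\<^sub>R w"
    proof -
      have "transpose D *v x' = y - \<epsilon> *\<^sub>R (y - u)"
        unfolding x'_def h_def y_def u_def
        by (simp only: matrix_vector_mult_diff_distrib matrix_vector_mult_scaleR)
      then show ?thesis unfolding z'_def w_def by (simp add: algebra_simps)
    qed
    have Rz: "Rf z' \<le> Rf zh + \<epsilon> * X"
    proof -
      have "z' = (1 - \<epsilon>) *\<^sub>R zh + \<epsilon> *\<^sub>R u" unfolding z'_def by (simp add: algebra_simps)
      then have "norm1 z' \<le> norm1 ((1 - \<epsilon>) *\<^sub>R zh) + norm1 (\<epsilon> *\<^sub>R u)" by (simp add: norm1_add)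
      also have "\<dots> = (1 - \<epsilon>) * norm1 zh + \<epsilon> * norm1 u" using e0 by (simp add: norm1_scale)
      finally have n1: "norm1 z' \<le> (1 - \<epsilon>) * norm1 zh + \<epsilon> * norm1 u" .
      have "norm zh \<le> norm z' + norm (\<epsilon> *\<^sub>R (u - zh))"
        unfolding z'_def by (metis add_diff_cancel_left' norm_triangle_ineq4 diff_add_cancel norm_minus_commute
            add.commute norm_triangle_sub)
      then have n2: "norm zh \<le> norm z' + \<epsilon> * norm (u - zh)" using e0 by simp
      have "\<alpha> * norm zh \<le> \<alpha> * norm z' + \<alpha> * (\<epsilon> * norm (u - zh))"
        using mult_left_mono[OF n2 alpha] by (simp add: algebra_simps)
      then show ?thesis unfolding Rf_def X_def using n1 by (simp add: algebra_simps)
    qed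
    have "objective lam \<alpha> \<mu> A D b xh zh \<le> objective lam \<alpha> \<mu> A D b x' z'" using minimizer by blast
    then have "lam * Rf zh + 1/2 * (norm r)^2 + \<mu>/2 * (norm w)^2
        \<le> lam * Rf z' + 1/2 * (norm (r - \<epsilon> *\<^sub>R q))^2 + \<mu>/2 * (norm ((1 - \<epsilon>) *\<^sub>R w))^2"
      unfolding objective_def ax dx Rf_def r_def w_def y_def by simp
    also have "(norm (r - \<epsilon> *\<^sub>R q))^2 = (norm r)^2 - 2 * \<epsilon> * inner r q + \<epsilon>^2 * (norm q)^2"
    proof -
      have "inner (r - \<epsilon> *\<^sub>R q) (r - \<epsilon> *\<^sub>R q) = inner r r - 2 * \<epsilon> * inner r q + \<epsilon>^2 * inner q q"
        by (simp add: inner_diff_left inner_diff_right inner_commute algebra_simps power2_eq_square)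
      then show ?thesis by (simp only: power2_norm_eq_inner)
    qed
    also have "(norm ((1 - \<epsilon>) *\<^sub>R w))^2 = (1 - \<epsilon>)^2 * (norm w)^2"
      by (simp add: power_mult_distrib)
    finally have "lam * Rf zh + 1/2 * (norm r)^2 + \<mu>/2 * (norm w)^2
        \<le> lam * Rf z' + 1/2 * ((norm r)^2 - 2 * \<epsilon> * inner r q + \<epsilon>^2 * (norm q)^2) + \<mu>/2 * ((1 - \<epsilon>)^2 * (norm w)^2)" .
    moreover have "lam * Rf z' \<le> lam * Rf zh + lam * (\<epsilon> * X)"
    proof -
      have "lam * Rf z' \<le> lam * (Rf zh + \<epsilon> * X)" using Rz lam by (intro mult_left_mono) auto
      then show ?thesis by (simp add: distrib_left)
    qed
    ultimately have "0 \<le> \<epsilon> * (lam * X - inner r q - \<mu> * (norm w)^2 + \<epsilon> * ((norm q)^2 / 2 + \<mu> * (norm w)^2 / 2))"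
      by (simp add: algebra_simps power2_eq_square)
    then show ?thesis using e0 by (simp add: zero_le_mult_iff)
  qed
  have L0: "0 \<le> lam * X - inner r q - \<mu> * (norm w)^2"
    by (rule small_eps) (rule key)
  have inner_rq: "inner r q \<ge> (norm q)^2 - lam * norm q"
  proof -
    have "inner e q \<le> norm e * norm q" by (rule norm_cauchy_schwarz)
    also have "\<dots> \<le> lam * norm q" using e by (simp add: mult_right_mono)
    finally show ?thesis unfolding rq by (simp add: inner_diff_left power2_norm_eq_inner)
  qed
  have nh: "norm (u - y) = norm h"
  proof -
    have "u - y = transpose D *v (x - xh)" unfolding u_def y_def by (simp only: matrix_vector_mult_diff_distrib)
    then have "norm (u - y) = norm (x - xh)" using norm_Dt[OF DDt] by simp
    then show ?thesis unfolding h_def by (simp add: norm_minus_commute)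
  qed
  have X_le: "X \<le> norm1 u - norm1 y + \<alpha> * norm h + (norm1 w + \<alpha> * norm w)"
  proof -
    have "norm1 y \<le> norm1 zh + norm1 w" unfolding w_def using norm1_add[of zh "y - zh"] by simp
    moreover have "norm (u - zh) \<le> norm h + norm w"
      using norm_triangle_ineq[of "u - y" "y - zh"] nh unfolding w_def by simp
    then have "\<alpha> * norm (u - zh) \<le> \<alpha> * (norm h + norm w)" using alpha by (simp add: mult_left_mono)
    ultimately show ?thesis unfolding X_def by (simp add: algebra_simps)
  qed
  define d where "d = real CARD('d)"
  have d1: "d \<ge> 1" unfolding d_def by simp
  have wterm: "lam * (norm1 w + \<alpha> * norm w) - \<mu> * (norm w)^2 \<le> lam * ((1 + \<alpha>)^2 * d * lam / (2 * \<mu>))"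
  proof -
    have "norm1 w \<le> sqrt d * norm w" unfolding d_def by (rule norm1_le_sqrt_card)
    then have "lam * (norm1 w + \<alpha> * norm w) - \<mu> * (norm w)^2 \<le> (lam * (sqrt d + \<alpha>)) * norm w - \<mu> * (norm w)^2"
      using lam by (simp add: algebra_simps mult_left_mono)
    also have "\<dots> \<le> (lam * (sqrt d + \<alpha>))^2 / (4 * \<mu>)" by (rule amgm_quad[OF mu])
    also have "\<dots> \<le> (lam * ((1 + \<alpha>) * sqrt d))^2 / (4 * \<mu>)"
    proof -
      have "sqrt d \<ge> 1" using d1 by simp
      then have "\<alpha> * 1 \<le> \<alpha> * sqrt d" using alpha by (intro mult_left_mono) auto
      then have "sqrt d + \<alpha> \<le> (1 + \<alpha>) * sqrt d" by (simp add: algebra_simps)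
      then have "lam * (sqrt d + \<alpha>) \<le> lam * ((1 + \<alpha>) * sqrt d)" using lam by simp
      then have "(lam * (sqrt d + \<alpha>))^2 \<le> (lam * ((1 + \<alpha>) * sqrt d))^2"
        using lam alpha d1 by (intro power_mono) auto
      then show ?thesis using mu by (simp add: divide_right_mono)
    qed
    also have "\<dots> = lam * ((1 + \<alpha>)^2 * d * lam / (4 * \<mu>))" using d1 by (simp add: power_mult_distrib power2_eq_square)
    also have "\<dots> \<le> lam * ((1 + \<alpha>)^2 * d * lam / (2 * \<mu>))"
      using lam mu d1 by (intro mult_left_mono divide_left_mono) auto
    finally show ?thesis .
  qed
  have "(norm q)^2 - lam * norm q \<le> lam * X - \<mu> * (norm w)^2" using L0 inner_rq by simp
  also have "\<dots> \<le> lam * (norm1 u - norm1 y + \<alpha> * norm h) + (lam * (norm1 w + \<alpha> * norm w) - \<mu> * (norm w)^2)"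
    using mult_left_mono[OF X_le, of lam] lam by (simp add: algebra_simps)
  also have "\<dots> \<le> lam * (norm1 u - norm1 y + \<alpha> * norm h) + lam * ((1 + \<alpha>)^2 * d * lam / (2 * \<mu>))"
    using wterm by simp
  finally show ?thesis unfolding q_def h_def u_def y_def d_def by (simp add: algebra_simps)
qed




lemma inner_rv_self: "inner (rv H v) v = (norm (rv H v))^2"
proof -
  have "inner (rv H v) v = (\<Sum>i\<in>UNIV. (rv H v $ i) * (v $ i))" by (simp add: inner_vec_def)
  also have "\<dots> = (\<Sum>i\<in>UNIV. (rv H v $ i)^2)" by (rule sum.cong) (auto simp: power2_eq_square)
  also have "\<dots> = (norm (rv H v))^2" by (simp add: norm_sq_vec)
  finally show ?thesis .
qed

lemma rip_step:
  fixes A :: "real^'n^'m" and D :: "real^'d^'n" and h :: "real^'n" and H :: "'d set"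
  assumes DDt: "D ** transpose D = mat 1"
    and cardH: "card H \<le> kH" and k: "k > 0"
    and M: "M \<ge> 0" "\<forall>i\<in>-H. \<bar>(transpose D *v h) $ i\<bar> \<le> M"
  shows "(1 - DRIC A D kH) * norm (rv H (transpose D *v h)) \<le>
     sqrt (1 + DRIC A D kH) * norm (A *v h) +
     DROC A D kH k * (norm1 (rv (-H) (transpose D *v h)) / sqrt k + sqrt k * M / 4)"
proof -
  define v where "v = transpose D *v h"
  define \<delta> where "\<delta> = DRIC A D kH"
  define \<theta> where "\<theta> = DROC A D kH k"
  define p where "p = rv H v"
  define p' where "p' = rv (-H) v"
  define a where "a = norm p"
  define Tail where "Tail = norm1 p' / sqrt k + sqrt k * M / 4"
  have d0: "\<delta> \<ge> 0" unfolding \<delta>_def by (rule DRIC_props(1)[OF DDt])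
  have t0: "\<theta> \<ge> 0" unfolding \<theta>_def by (rule DROC_props(1)[OF DDt])
  have Tail0: "Tail \<ge> 0" unfolding Tail_def using M norm1_nonneg[of p'] by simp
  have spp: "sparse kH p" unfolding p_def by (rule sparse_rv[OF cardH])
  have hv: "D *v v = h" unfolding v_def by (rule DDt_apply[OF DDt])
  have vsplit: "v = p + p'" unfolding p_def p'_def by (simp add: rv_split)
  have hsplit: "h = D *v p + D *v p'" using hv vsplit by (simp add: matrix_vector_right_distrib)
  define E where "E = (\<lambda>q. inner (A *v (D *v p)) (A *v (D *v q)) - inner (D *v p) (D *v q))"
  have Eadd: "E (a1 + b1) = E a1 + E b1" for a1 b1
    unfolding E_def by (simp add: matrix_vector_right_distrib inner_add_right)
  have Eblk: "\<bar>E (rv B v)\<bar> \<le> (\<theta> * norm p) * norm (rv B v)" if "card B \<le> k" for B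
    using DROC_props(2)[OF DDt spp sparse_rv[OF that, of v]] unfolding E_def \<theta>_def by (simp add: mult.assoc)
  have Mv: "\<forall>i\<in>-H. \<bar>v$i\<bar> \<le> M" using M(2) unfolding v_def .
  have tb: "\<bar>E p'\<bar> \<le> (\<theta> * a) * Tail"
    using Mv tail_bound[where E=E and k=k and c="\<theta> * norm p" and v=v and U="-H" and M=M, OF Eadd Eblk _ k] M t0
    unfolding p'_def Tail_def a_def by (simp add: p'_def)
  have Dpp: "norm (D *v p) \<le> a" unfolding a_def by (rule norm_D_le[OF DDt])
  have ric1: "(1 - \<delta>) * (norm (D *v p))^2 \<le> (norm (A *v (D *v p)))^2"
    unfolding \<delta>_def by (rule DRIC_props(2)[OF DDt spp])
  have ric2: "(norm (A *v (D *v p)))^2 \<le> (1 + \<delta>) * (norm (D *v p))^2"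
    unfolding \<delta>_def by (rule DRIC_props(3)[OF DDt spp])
  have inDh: "inner (D *v p) h = a^2"
    using inner_Dt[of D p h] inner_rv_self[of H v] unfolding a_def p_def v_def by simp
  have lower: "inner (A *v (D *v p)) (A *v h) \<ge> (1 - \<delta>) * a^2 - \<theta> * a * Tail"
  proof -
    have "inner (A *v (D *v p)) (A *v h) = (norm (A *v (D *v p)))^2 + inner (A *v (D *v p)) (A *v (D *v p'))"
      unfolding hsplit by (simp add: matrix_vector_right_distrib inner_add_right power2_norm_eq_inner)
    also have "inner (A *v (D *v p)) (A *v (D *v p')) = inner (D *v p) (D *v p') + E p'" unfolding E_def by simp
    also have "inner (D *v p) (D *v p') = a^2 - (norm (D *v p))^2"
      using inDh unfolding hsplit by (simp add: inner_add_right power2_norm_eq_inner)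
    finally have eq: "inner (A *v (D *v p)) (A *v h) = (norm (A *v (D *v p)))^2 + a^2 - (norm (D *v p))^2 + E p'"
      by simp
    have "\<delta> * (norm (D *v p))^2 \<le> \<delta> * a^2"
      using Dpp d0 by (intro mult_left_mono power_mono) auto
    then show ?thesis using eq ric1 tb by (simp add: algebra_simps)
  qed
  have upper: "inner (A *v (D *v p)) (A *v h) \<le> sqrt (1 + \<delta>) * a * norm (A *v h)"
  proof -
    have "norm (A *v (D *v p)) \<le> sqrt (1 + \<delta>) * norm (D *v p)"
    proof -
      have "norm (A *v (D *v p)) = sqrt ((norm (A *v (D *v p)))^2)" by simp
      also have "\<dots> \<le> sqrt ((1 + \<delta>) * (norm (D *v p))^2)" using ric2 by (rule real_sqrt_le_mono)
      also have "\<dots> = sqrt (1 + \<delta>) * norm (D *v p)" by (simp add: real_sqrt_mult)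
      finally show ?thesis .
    qed
    also have "\<dots> \<le> sqrt (1 + \<delta>) * a" using Dpp d0 by (intro mult_left_mono) auto
    finally have n: "norm (A *v (D *v p)) \<le> sqrt (1 + \<delta>) * a" .
    have "inner (A *v (D *v p)) (A *v h) \<le> norm (A *v (D *v p)) * norm (A *v h)" by (rule norm_cauchy_schwarz)
    also have "\<dots> \<le> sqrt (1 + \<delta>) * a * norm (A *v h)" using n by (simp add: mult_right_mono)
    finally show ?thesis .
  qed
  have main: "a * ((1 - \<delta>) * a) \<le> a * (sqrt (1 + \<delta>) * norm (A *v h) + \<theta> * Tail)"
    using lower upper by (simp add: algebra_simps power2_eq_square)
  have "(1 - \<delta>) * a \<le> sqrt (1 + \<delta>) * norm (A *v h) + \<theta> * Tail"
  proof (cases "a = 0")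
    case True
    have "sqrt (1 + \<delta>) * norm (A *v h) \<ge> 0" using d0 by simp
    moreover have "\<theta> * Tail \<ge> 0" using t0 Tail0 by simp
    ultimately show ?thesis using True by simp
  next
    case False
    then have "a > 0" unfolding a_def by simp
    then show ?thesis using main by simp
  qed
  then show ?thesis unfolding a_def p_def v_def \<delta>_def \<theta>_def Tail_def p'_def .
qed




lemma K_lemma:
  fixes y a g r \<alpha> :: real
  assumes y: "y \<ge> 0" and a: "a \<ge> 0" and g: "g \<ge> 0" and r: "r \<ge> 1" and al: "\<alpha> \<ge> 0"
    and h: "y^2 \<le> (a / r) * (r * a + \<alpha> * (a + y) + g)"
  shows "a + y \<le> (2 + (2 * \<alpha> + 1) / (2 * r)) * a + g / 2"
proof -
  define B where "B = \<alpha> * a / r"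
  define C where "C = a^2 * (1 + \<alpha> / r) + a * g / r"
  define Y0 where "Y0 = a * (1 + (2 * \<alpha> + 1) / (2 * r)) + g / 2"
  have r0: "r > 0" using r by simp
  have hh: "y^2 \<le> B * y + C" using h r0 unfolding B_def C_def by (simp add: field_simps power2_eq_square)
  have Y0B: "Y0 - B = a * (1 + 1 / (2 * r)) + g / 2" unfolding Y0_def B_def using r0 by (simp add: field_simps)
  have Y0B0: "Y0 - B \<ge> 0" unfolding Y0B using a g r0 by simp
  have c1: "(1 + (2 * \<alpha> + 1) / (2 * r)) * (1 + 1 / (2 * r)) \<ge> 1 + \<alpha> / r"
  proof -
    have "(1 + (2 * \<alpha> + 1) / (2 * r)) * (1 + 1 / (2 * r)) = 1 + (\<alpha> + 1) / r + (2 * \<alpha> + 1) / (4 * r^2)"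
      using r0 by (simp add: field_simps power2_eq_square)
    moreover have "(2 * \<alpha> + 1) / (4 * r^2) \<ge> 0" using al by simp
    moreover have "(\<alpha> + 1) / r \<ge> \<alpha> / r" using r0 by (simp add: divide_right_mono)
    ultimately show ?thesis by linarith
  qed
  have ag: "a * g \<ge> 0" using a g by simp
  have "a * g * 1 \<le> a * g * r" using ag r by (intro mult_left_mono) auto
  then have c2: "a * g / r \<le> a * g" using r0 by (simp add: divide_le_eq)
  have "Y0 * (Y0 - B) = a^2 * ((1 + (2 * \<alpha> + 1) / (2 * r)) * (1 + 1 / (2 * r)))
      + a * g / 2 * ((1 + (2 * \<alpha> + 1) / (2 * r)) + (1 + 1 / (2 * r))) + g^2 / 4"
    unfolding Y0B unfolding Y0_def using r0 by (simp add: field_simps power2_eq_square)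
  moreover have "a^2 * ((1 + (2 * \<alpha> + 1) / (2 * r)) * (1 + 1 / (2 * r))) \<ge> a^2 * (1 + \<alpha> / r)"
    using c1 by (simp add: mult_left_mono)
  moreover have "a * g / 2 * ((1 + (2 * \<alpha> + 1) / (2 * r)) + (1 + 1 / (2 * r))) \<ge> a * g / 2 * 2"
    using a g al r0 by (intro mult_left_mono) auto
  moreover have "g^2 / 4 \<ge> 0" by simp
  moreover have "a * g / 2 * 2 = a * g" by simp
  ultimately have YC: "Y0 * (Y0 - B) \<ge> C" unfolding C_def using c2 by linarith
  have "y \<le> Y0"
  proof (rule ccontr)
    assume "\<not> y \<le> Y0"
    then have yg: "y > Y0" by simp
    have "y * (y - B) - Y0 * (Y0 - B) = (y - Y0) * (y + Y0 - B)" by (simp add: algebra_simps)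
    moreover have "B \<ge> 0" unfolding B_def using al a r0 by simp
    then have "(y - Y0) * (y + Y0 - B) > 0" using yg Y0B0 by (intro mult_pos_pos) auto
    ultimately have "y * (y - B) > C" using YC by linarith
    then show False using hh by (simp add: algebra_simps power2_eq_square)
  qed
  then show ?thesis unfolding Y0_def by (simp add: algebra_simps)
qed

lemma a_bound:
  fixes a g \<eta> \<delta> \<theta> c1 c2 \<rho> \<tau> :: real
  assumes h: "(1 - \<delta>) * a \<le> sqrt (1 + \<delta>) * \<eta> + \<theta> * (c1 * a + c2 * g)"
    and a: "a \<ge> 0" and g: "g \<ge> 0" and th: "\<theta> \<ge> 0" and rho: "\<rho> \<ge> \<delta> + \<theta> * c1" "\<rho> < 1"
    and tau: "\<tau> \<ge> \<theta> * c2 / (1 - \<rho>)"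
  shows "a \<le> \<tau> * g + sqrt (1 + \<delta>) / (1 - \<rho>) * \<eta>"
proof -
  have r1: "1 - \<rho> > 0" using rho by simp
  have "(1 - \<rho>) * a \<le> (1 - \<delta> - \<theta> * c1) * a" using rho a by (intro mult_right_mono) auto
  also have "\<dots> \<le> sqrt (1 + \<delta>) * \<eta> + \<theta> * c2 * g" using h by (simp add: algebra_simps)
  finally have "a \<le> (sqrt (1 + \<delta>) * \<eta> + \<theta> * c2 * g) / (1 - \<rho>)" using r1 by (simp add: field_simps)
  also have "\<dots> = \<theta> * c2 / (1 - \<rho>) * g + sqrt (1 + \<delta>) / (1 - \<rho>) * \<eta>" by (simp add: add_divide_distrib)
  also have "\<dots> \<le> \<tau> * g + sqrt (1 + \<delta>) / (1 - \<rho>) * \<eta>"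
    using mult_right_mono[OF tau g] by (rule add_right_mono)
  finally show ?thesis .
qed

lemma K_simp:
  fixes s \<alpha> :: real
  assumes "s > 0" "\<alpha> \<ge> 0"
  shows "sqrt ((\<alpha> + sqrt s) / sqrt s + \<alpha>^2 / (4 * s)) + (\<alpha> + 1) / (2 * sqrt s) + 1 = 2 + (2 * \<alpha> + 1) / (2 * sqrt s)"
proof -
  have r: "sqrt s > 0" using assms by simp
  have "(\<alpha> + sqrt s) / sqrt s + \<alpha>^2 / (4 * s) = (1 + \<alpha> / (2 * sqrt s))^2"
    using r assms by (simp add: field_simps power2_eq_square)
  moreover have "1 + \<alpha> / (2 * sqrt s) \<ge> 0" using r assms by simp
  ultimately have "sqrt ((\<alpha> + sqrt s) / sqrt s + \<alpha>^2 / (4 * s)) = 1 + \<alpha> / (2 * sqrt s)" by simp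
  then show ?thesis using r by (simp add: field_simps)
qed




lemma sqrt2_bounds: "sqrt 2 \<ge> 7/5" "sqrt 2 \<le> 10/7" "sqrt (2::real) > 0"
proof -
  show "sqrt 2 \<ge> 7/5" by (rule real_le_rsqrt) (simp add: power2_eq_square)
  have "sqrt (2::real) \<le> sqrt ((10/7)^2)" by (intro real_sqrt_le_mono) (simp add: power2_eq_square)
  then show "sqrt 2 \<le> 10/7" by simp
  show "sqrt (2::real) > 0" by simp
qed

lemma q_ratio: "(sqrt 2 + 1) / sqrt 2 \<ge> (17/10::real)"
proof -
  have q: "sqrt (2::real) > 0" "sqrt (2::real) \<le> 10/7" using sqrt2_bounds by auto
  then have "17/10 * sqrt 2 \<le> sqrt 2 + 1" by linarith
  then show ?thesis using q by (simp add: le_divide_eq)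
qed

lemma const_ii_a:
  fixes r \<alpha> :: real
  assumes r: "r \<ge> 7/5" and al: "0 < \<alpha>" "\<alpha> \<le> 1"
  shows "(sqrt 2 + 1) * (r + \<alpha>) / (sqrt 2 * (r - 1)) \<ge> 5/4 + \<alpha> * (2 + (2 * \<alpha> + 1) / (2 * r)) / r"
proof -
  have r1: "r - 1 > 0" "r > 0" using r by auto
  have poly: "17/10 * (r + \<alpha>) * r^2 \<ge> (r - 1) * (5/4 * r^2 + \<alpha> * (2 * r + \<alpha> + 1/2))"
  proof -
    have e: "17/10 * (r + \<alpha>) * r^2 - (r - 1) * (5/4 * r^2 + \<alpha> * (2 * r + \<alpha> + 1/2))
      = (45/100 * r^3 - 3/10 * \<alpha> * r^2) + (5/4 * r^2 - \<alpha>^2 * r) + 3/2 * \<alpha> * r + \<alpha>^2 + \<alpha> / 2"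
      by (simp add: field_simps power2_eq_square power3_eq_cube)
    have 1: "3/10 * \<alpha> * r^2 \<le> 45/100 * r^3"
    proof -
      have "3/10 * \<alpha> * r^2 \<le> 3/10 * 1 * r^2" using al by (intro mult_right_mono) auto
      also have "\<dots> \<le> 45/100 * r^3" using r by (simp add: power2_eq_square power3_eq_cube mult_right_mono)
      finally show ?thesis .
    qed
    have 2: "\<alpha>^2 * r \<le> 5/4 * r^2"
    proof -
      have "\<alpha>^2 \<le> 1" using al by (simp add: power_le_one)
      then have "\<alpha>^2 * r \<le> 1 * r" using r1 by (intro mult_right_mono) auto
      also have "\<dots> \<le> 5/4 * r^2" using r by (simp add: power2_eq_square)
      finally show ?thesis .
    qed
    have "3/2 * \<alpha> * r + \<alpha>^2 + \<alpha> / 2 \<ge> 0" using al r1 by simp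
    then show ?thesis using e 1 2 by linarith
  qed
  have "5/4 + \<alpha> * (2 + (2 * \<alpha> + 1) / (2 * r)) / r = (5/4 * r^2 + \<alpha> * (2 * r + \<alpha> + 1/2)) / r^2"
    using r1 by (simp add: field_simps power2_eq_square)
  also have "\<dots> \<le> 17/10 * (r + \<alpha>) / (r - 1)"
  proof -
    define NN where "NN = 5/4 * r^2 + \<alpha> * (2 * r + \<alpha> + 1/2)"
    have r2p: "r^2 > 0" using r1 by simp
    have "(NN * (r - 1)) / r^2 \<le> 17/10 * (r + \<alpha>)"
      using poly r2p unfolding NN_def by (simp add: pos_divide_le_eq mult.commute)
    then have "NN / r^2 * (r - 1) \<le> 17/10 * (r + \<alpha>)" by simp
    then show ?thesis unfolding NN_def[symmetric] using r1 by (subst pos_le_divide_eq) auto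
  qed
  also have "\<dots> = 17/10 * ((r + \<alpha>) / (r - 1))" by simp
  also have "\<dots> \<le> (sqrt 2 + 1) / sqrt 2 * ((r + \<alpha>) / (r - 1))"
  proof -
    have "(r + \<alpha>) / (r - 1) \<ge> 0" using r1 al by simp
    then show ?thesis by (rule mult_right_mono[OF q_ratio])
  qed
  also have "\<dots> = (sqrt 2 + 1) * (r + \<alpha>) / (sqrt 2 * (r - 1))" by simp
  finally show ?thesis .
qed

lemma const_ii_b:
  fixes r \<alpha> :: real
  assumes r: "r \<ge> 7/5" and al: "0 < \<alpha>" "\<alpha> \<le> 1"
  shows "(sqrt 2 + 1) / (sqrt 2 * (r - 1)) \<ge> (1 + \<alpha> / 2) / r"
proof -
  have r1: "r - 1 > 0" "r > 0" using r by auto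
  have "(1 + \<alpha> / 2) / r \<le> (3/2) / r" using divide_right_mono[of "1 + \<alpha> / 2" "3/2" r] al r1 by simp
  also have "\<dots> \<le> (17/10) / (r - 1)" using r1 by (simp add: field_simps)
  also have "\<dots> \<le> ((sqrt 2 + 1) / sqrt 2) / (r - 1)" by (rule divide_right_mono[OF q_ratio]) (use r1 in simp)
  also have "\<dots> = (sqrt 2 + 1) / (sqrt 2 * (r - 1))" by simp
  finally show ?thesis .
qed

lemma const_i_a:
  fixes r \<alpha> k t s :: real
  assumes r: "r = sqrt s" "s \<ge> 2" and al: "0 < \<alpha>" "\<alpha> \<le> 1" and t: "t \<ge> 3" and k: "k \<ge> (t - 1) * s"
  shows "sqrt (k / ((t - 1)^2 * s)) * ((sqrt 2 + 1) * (r + \<alpha>) / (sqrt 2 * (r - 1)))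
     \<ge> (r + \<alpha> * (2 + (2 * \<alpha> + 1) / (2 * r))) / sqrt k"
proof -
  define Z where "Z = (sqrt 2 + 1) * (r + \<alpha>) / (sqrt 2 * (r - 1))"
  define K0 where "K0 = 2 + (2 * \<alpha> + 1) / (2 * r)"
  have r2: "r \<ge> sqrt 2" using r by simp
  then have r75: "r \<ge> 7/5" using sqrt2_bounds by linarith
  have r0: "r > 0" using r75 by simp
  have s0: "s > 0" using r by simp
  have rr: "r^2 = s" using r s0 by simp
  have t1: "t - 1 > 0" using t by simp
  have kpos: "k > 0" using k t1 s0 by (smt (verit) mult_pos_pos)
  have Z1: "Z \<ge> 1 + \<alpha> * K0 / r"
    using const_ii_a[OF r75 al] unfolding Z_def K0_def by linarith
  have sk: "sqrt k > 0" using kpos by simp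
  have sq: "sqrt (k / ((t - 1)^2 * s)) = sqrt k / ((t - 1) * r)"
    using t1 r s0 by (simp add: real_sqrt_divide real_sqrt_mult)
  have "(r + \<alpha> * K0) / sqrt k = (t - 1) * r * (r + \<alpha> * K0) / (sqrt k * ((t - 1) * r))"
    using t1 r0 sk by (simp add: field_simps)
  also have "(t - 1) * r * (r + \<alpha> * K0) = (t - 1) * r^2 * (1 + \<alpha> * K0 / r)"
    using r0 by (simp add: field_simps power2_eq_square)
  also have "\<dots> \<le> k * Z"
  proof -
    have "(t - 1) * r^2 * (1 + \<alpha> * K0 / r) \<le> k * (1 + \<alpha> * K0 / r)"
      using k rr t1 al r0 by (intro mult_right_mono) (auto simp: K0_def)
    also have "\<dots> \<le> k * Z" using Z1 kpos by (intro mult_left_mono) auto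
    finally show ?thesis .
  qed
  finally have "(r + \<alpha> * K0) / sqrt k \<le> k * Z / (sqrt k * ((t - 1) * r))"
    using sk t1 r0 by (simp add: divide_right_mono)
  also have "k * Z / (sqrt k * ((t - 1) * r)) = sqrt k / ((t - 1) * r) * Z"
    using kpos sk t1 r0 by (simp add: field_simps)
  finally show ?thesis unfolding sq Z_def K0_def .
qed

lemma const_i_b:
  fixes r \<alpha> k t s :: real
  assumes r: "r = sqrt s" "s \<ge> 2" and al: "0 < \<alpha>" "\<alpha> \<le> 1" and t: "t \<ge> 3" and k: "k \<ge> (t - 1) * s"
  shows "sqrt ((t - 1) * s) / ((t - 1) * (s - r)) * ((sqrt 2 + 1) / sqrt 2) \<ge> (1 + \<alpha> / 2) / sqrt k"
proof -
  have r2: "r \<ge> sqrt 2" using r by simp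
  then have r75: "r \<ge> 7/5" using sqrt2_bounds by linarith
  have r0: "r > 1" using r75 by simp
  have s0: "s > 0" using r by simp
  have rr: "r * r = s" using r s0 by simp
  have t1: "t - 1 > 0" using t by simp
  have st: "sqrt (t - 1) > 0" using t1 by simp
  have e: "sqrt ((t - 1) * s) / ((t - 1) * (s - r)) * ((sqrt 2 + 1) / sqrt 2)
     = ((sqrt 2 + 1) / (sqrt 2 * (r - 1))) / sqrt (t - 1)"
  proof -
    define u where "u = sqrt (t - 1)"
    have A1: "sqrt ((t - 1) * s) = u * r" using r unfolding u_def by (simp add: real_sqrt_mult)
    have A2: "t - 1 = u * u" using t1 unfolding u_def by simp
    have A3: "s - r = r * (r - 1)" using rr by (simp add: algebra_simps)
    have u0: "u > 0" using st unfolding u_def .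
    have "sqrt ((t - 1) * s) / ((t - 1) * (s - r)) = (u * r) / ((u * u) * (r * (r - 1)))"
      by (simp only: A1 A3) (simp only: A2)
    also have "\<dots> = 1 / (u * (r - 1))" using u0 r0 by (simp add: field_simps)
    finally have X: "sqrt ((t - 1) * s) / ((t - 1) * (s - r)) = 1 / (u * (r - 1))" .
    have "sqrt ((t - 1) * s) / ((t - 1) * (s - r)) * ((sqrt 2 + 1) / sqrt 2) = 1 / (u * (r - 1)) * ((sqrt 2 + 1) / sqrt 2)"
      by (simp only: X)
    also have "\<dots> = ((sqrt 2 + 1) / (sqrt 2 * (r - 1))) / u" using u0 r0 by (simp add: field_simps)
    finally show ?thesis unfolding u_def .
  qed
  have "sqrt k \<ge> sqrt ((t - 1) * s)" using k by simp
  also have "sqrt ((t - 1) * s) = sqrt (t - 1) * r" using r by (simp add: real_sqrt_mult)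
  finally have skr: "sqrt k \<ge> sqrt (t - 1) * r" .
  have pr: "sqrt (t - 1) * r > 0" using st r0 by simp
  have skp: "sqrt k > 0" using skr pr by linarith
  have "(1 + \<alpha> / 2) / sqrt k \<le> (1 + \<alpha> / 2) / (sqrt (t - 1) * r)"
    using skr pr al skp by (intro divide_left_mono) auto
  also have "\<dots> = ((1 + \<alpha> / 2) / r) / sqrt (t - 1)" by simp
  also have "\<dots> \<le> ((sqrt 2 + 1) / (sqrt 2 * (r - 1))) / sqrt (t - 1)"
    by (rule divide_right_mono[OF const_ii_b[OF r75 al]]) (use st in simp)
  finally show ?thesis unfolding e .
qed




lemma Dcols_apply: "(transpose (Dcols S D) *v x) $ j = (if j \<in> S then (transpose D *v x) $ j else 0)"
  by (simp add: Dcols_def transpose_def matrix_vector_mult_def vector_matrix_mult_def)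

lemma norm1_Dcols: "norm1 (transpose (Dcols S D) *v x) = norm1 (rv S (transpose D *v x))"
proof -
  have "\<And>j. \<bar>(transpose (Dcols S D) *v x) $ j\<bar> = \<bar>rv S (transpose D *v x) $ j\<bar>"
    by (simp only: Dcols_apply rv_nth)
  then show ?thesis unfolding norm1_def by simp
qed

lemma swap_sum:
  fixes f :: "'d::finite \<Rightarrow> real"
  assumes c: "card S = card T" and dom: "\<forall>i\<in>S. \<forall>j\<in>-S. \<bar>f j\<bar> \<le> \<bar>f i\<bar>"
  shows "(\<Sum>i\<in>T. \<bar>f i\<bar>) \<le> (\<Sum>i\<in>S. \<bar>f i\<bar>)"
proof -
  have cd: "card (T - S) = card (S - T)"
  proof -
    have "card (T - S) = card T - card (T \<inter> S)" by (simp add: card_Diff_subset_Int)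
    moreover have "card (S - T) = card S - card (S \<inter> T)" by (simp add: card_Diff_subset_Int)
    ultimately show ?thesis using c by (simp add: Int_commute)
  qed
  have "(\<Sum>i\<in>T - S. \<bar>f i\<bar>) \<le> (\<Sum>i\<in>S - T. \<bar>f i\<bar>)"
  proof (cases "S - T = {}")
    case True
    then have "T - S = {}" using cd by (metis card_0_eq finite)
    then show ?thesis using True by simp
  next
    case False
    define m where "m = Min ((\<lambda>i. \<bar>f i\<bar>) ` (S - T))"
    have m1: "\<And>i. i \<in> S - T \<Longrightarrow> m \<le> \<bar>f i\<bar>" unfolding m_def by auto
    have "m \<in> (\<lambda>i. \<bar>f i\<bar>) ` (S - T)" unfolding m_def using False by (intro Min_in) auto
    then obtain i0 where i0: "i0 \<in> S - T" "\<bar>f i0\<bar> = m" by auto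
    have m2: "\<And>j. j \<in> T - S \<Longrightarrow> \<bar>f j\<bar> \<le> m" using dom i0 by auto
    have "(\<Sum>i\<in>T - S. \<bar>f i\<bar>) \<le> (\<Sum>i\<in>T - S. m)" by (rule sum_mono) (rule m2)
    also have "\<dots> = card (S - T) * m" using cd by simp
    also have "\<dots> = (\<Sum>i\<in>S - T. m)" by simp
    also have "\<dots> \<le> (\<Sum>i\<in>S - T. \<bar>f i\<bar>)" by (rule sum_mono) (rule m1)
    finally show ?thesis .
  qed
  moreover have "(\<Sum>i\<in>T. \<bar>f i\<bar>) = (\<Sum>i\<in>T - S. \<bar>f i\<bar>) + (\<Sum>i\<in>T \<inter> S. \<bar>f i\<bar>)"
    using sum.Int_Diff[of T "\<lambda>i. \<bar>f i\<bar>" S] by simp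
  moreover have "(\<Sum>i\<in>S. \<bar>f i\<bar>) = (\<Sum>i\<in>S - T. \<bar>f i\<bar>) + (\<Sum>i\<in>S \<inter> T. \<bar>f i\<bar>)"
    using sum.Int_Diff[of S "\<lambda>i. \<bar>f i\<bar>" T] by simp
  ultimately show ?thesis by (simp add: Int_commute)
qed

lemma sum_split_compl: "(\<Sum>i\<in>UNIV. g i) = (\<Sum>i\<in>S. g i) + (\<Sum>i\<in>-S. (g i :: real))" for S :: "'d::finite set"
  by (metis Compl_eq_Diff_UNIV add.commute finite subset_UNIV sum.subset_diff)

lemma abs_pt1: "\<bar>a\<bar> - \<bar>a + b\<bar> \<le> \<bar>b\<bar>" for a b :: real by (simp add: abs_if)
lemma abs_pt2: "\<bar>a\<bar> - \<bar>a + b\<bar> \<le> 2 * \<bar>a\<bar> - \<bar>b\<bar>" for a b :: real by (simp add: abs_if)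

lemma cone:
  fixes u v :: "real^'d"
  shows "norm1 u - norm1 (u + v) \<le> 2 * norm1 (rv (-T) u) + (\<Sum>i\<in>T. \<bar>v$i\<bar>) - (\<Sum>i\<in>-T. \<bar>v$i\<bar>)"
proof -
  have pt: "\<bar>u$i\<bar> - \<bar>u$i + v$i\<bar> \<le> (if i \<in> T then \<bar>v$i\<bar> else 2 * \<bar>u$i\<bar> - \<bar>v$i\<bar>)" for i
    using abs_pt1[of "u$i" "v$i"] abs_pt2[of "u$i" "v$i"] by simp
  have "norm1 u - norm1 (u + v) = (\<Sum>i\<in>UNIV. \<bar>u$i\<bar> - \<bar>u$i + v$i\<bar>)"
    unfolding norm1_def by (simp add: sum_subtractf)
  also have "\<dots> \<le> (\<Sum>i\<in>UNIV. (if i \<in> T then \<bar>v$i\<bar> else 2 * \<bar>u$i\<bar> - \<bar>v$i\<bar>))"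
    by (rule sum_mono) (rule pt)
  also have "\<dots> = (\<Sum>i\<in>T. \<bar>v$i\<bar>) + (\<Sum>i\<in>-T. 2 * \<bar>u$i\<bar> - \<bar>v$i\<bar>)"
  proof -
    have e1: "(\<Sum>i\<in>T. (if i \<in> T then \<bar>v$i\<bar> else 2 * \<bar>u$i\<bar> - \<bar>v$i\<bar>)) = (\<Sum>i\<in>T. \<bar>v$i\<bar>)"
      by (rule sum.cong) auto
    have e2: "(\<Sum>i\<in>-T. (if i \<in> T then \<bar>v$i\<bar> else 2 * \<bar>u$i\<bar> - \<bar>v$i\<bar>)) = (\<Sum>i\<in>-T. 2 * \<bar>u$i\<bar> - \<bar>v$i\<bar>)"
      by (rule sum.cong) auto
    show ?thesis by (subst sum_split_compl[of _ T]) (simp only: e1 e2)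
  qed
  also have "\<dots> = 2 * norm1 (rv (-T) u) + (\<Sum>i\<in>T. \<bar>v$i\<bar>) - (\<Sum>i\<in>-T. \<bar>v$i\<bar>)"
    by (simp add: norm1_rv sum_subtractf sum_distrib_left)
  finally show ?thesis .
qed




lemma common:
  fixes A :: "real^'n^'m" and D :: "real^'d^'n"
    and \<alpha> lam \<mu> :: real and s :: nat
    and x :: "real^'n" and e :: "real^'m" and b :: "real^'m"
    and T :: "'d set" and xh :: "real^'n" and zh :: "real^'d" and W :: real
  assumes DDt: "D ** transpose D = mat 1"
    and alpha: "0 < \<alpha>" "\<alpha> \<le> 1"
    and lam: "lam > 0" and mu: "\<mu> > 0"
    and s: "s \<ge> 2"
    and b: "b = A *v x + e" and e: "norm e \<le> lam"
    and Tcard: "card T = s"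
    and minimizer: "\<forall>x' z'. objective lam \<alpha> \<mu> A D b xh zh \<le> objective lam \<alpha> \<mu> A D b x' z'"
    and W_def: "W = 2 * norm1 (transpose (Dcols (- T) D) *v x)
                    + (\<alpha> + 1)^2 * real CARD('d) / 2 * (lam / \<mu>)"
  obtains S where "card S = s" "\<forall>i\<in>S. \<forall>j\<in>-S. \<bar>(transpose D *v (xh - x))$j\<bar> \<le> \<bar>(transpose D *v (xh - x))$i\<bar>"
    "norm (xh - x) \<le> (2 + (2 * \<alpha> + 1) / (2 * sqrt s)) * norm (rv S (transpose D *v (xh - x)))
        + (W + norm (A *v (xh - x))) / 2"
    "norm1 (rv (-S) (transpose D *v (xh - x))) \<le> (sqrt s + \<alpha> * (2 + (2 * \<alpha> + 1) / (2 * sqrt s))) * norm (rv S (transpose D *v (xh - x)))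
        + (1 + \<alpha> / 2) * (W + norm (A *v (xh - x)))"
    "(norm (A *v (xh - x)))^2 - lam * norm (A *v (xh - x)) \<le> lam * (W + (sqrt s + \<alpha>) * norm (rv S (transpose D *v (xh - x))))"
    "\<forall>j\<in>-S. \<bar>(transpose D *v (xh - x))$j\<bar> \<le> norm (rv S (transpose D *v (xh - x))) / sqrt s"
    "W \<ge> 0"
proof -
  define v where "v = transpose D *v (xh - x)"
  define \<eta> where "\<eta> = norm (A *v (xh - x))"
  define K0 where "K0 = 2 + (2 * \<alpha> + 1) / (2 * sqrt s)"
  define u where "u = transpose D *v x"
  define y where "y = transpose D *v xh"
  define N where "N = norm (xh - x)"
  have hv: "y = u + v" unfolding y_def u_def v_def by (simp only: matrix_vector_mult_diff_distrib) simp
  have NV: "N = norm v" unfolding N_def v_def using norm_Dt[OF DDt] by simp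
  have opt: "\<eta>^2 - lam * \<eta> \<le> lam * (norm1 u - norm1 y + \<alpha> * N + (1 + \<alpha>)^2 * CARD('d) * lam / (2 * \<mu>))"
    unfolding \<eta>_def u_def y_def N_def
    by (rule opt_ineq[OF DDt _ lam mu b e minimizer]) (use alpha in simp)
  have sle: "s \<le> card (UNIV :: 'd set)" using Tcard by (metis card_mono finite subset_UNIV)
  obtain S where S: "card S = s" "\<forall>i\<in>S. \<forall>j\<in>UNIV-S. \<bar>v$j\<bar> \<le> \<bar>v$i\<bar>"
    using exists_top[of s UNIV "\<lambda>i. v$i"] sle by auto
  have Sdom: "\<forall>i\<in>S. \<forall>j\<in>-S. \<bar>v$j\<bar> \<le> \<bar>v$i\<bar>" using S(2) by (simp add: Compl_eq_Diff_UNIV)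
  define P where "P = norm1 (rv S v)"
  define \<Gamma> where "\<Gamma> = norm1 (rv (-S) v)"
  define aS where "aS = norm (rv S v)"
  define y' where "y' = norm (rv (-S) v)"
  define W2 where "W2 = (1 + \<alpha>)^2 * CARD('d) * lam / (2 * \<mu>)"
  have W2nn: "W2 \<ge> 0" unfolding W2_def using lam mu by simp
  have Weq: "W = 2 * norm1 (rv (-T) u) + W2"
    unfolding W_def W2_def u_def norm1_Dcols by (simp add: field_simps)
  have W0: "W \<ge> 0" using Weq W2nn norm1_nonneg[of "rv (-T) u"] by simp
  have swap: "(\<Sum>i\<in>T. \<bar>v$i\<bar>) \<le> (\<Sum>i\<in>S. \<bar>v$i\<bar>)"
    by (rule swap_sum) (use S(1) Tcard Sdom in auto)
  have tot1: "norm1 v = (\<Sum>i\<in>T. \<bar>v$i\<bar>) + (\<Sum>i\<in>-T. \<bar>v$i\<bar>)" unfolding norm1_def by (rule sum_split_compl)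
  have tot2: "norm1 v = P + \<Gamma>" unfolding P_def \<Gamma>_def norm1_rv unfolding norm1_def by (rule sum_split_compl)
  have cn: "norm1 u - norm1 y \<le> 2 * norm1 (rv (-T) u) + P - \<Gamma>"
    using cone[of u v T] swap tot1 tot2 unfolding hv P_def norm1_rv by linarith
  have E1: "\<eta>^2 - lam * \<eta> \<le> lam * (W + P - \<Gamma> + \<alpha> * N)"
  proof -
    have "lam * (norm1 u - norm1 y + \<alpha> * N + W2) \<le> lam * (W + P - \<Gamma> + \<alpha> * N)"
      using cn Weq lam by (intro mult_left_mono) auto
    then show ?thesis using opt unfolding W2_def by linarith
  qed
  have aS0: "aS \<ge> 0" unfolding aS_def by simp
  have Gam0: "\<Gamma> \<ge> 0" unfolding \<Gamma>_def by (rule norm1_nonneg)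
  have y'0: "y' \<ge> 0" unfolding y'_def by simp
  have sq: "sqrt (real s) > 0" "sqrt (real s) \<ge> 1" using s by auto
  have PaS: "P \<le> sqrt s * aS"
    using CS_sum[of S "\<lambda>i. v$i"] S(1) unfolding P_def aS_def norm1_rv rv_norm_sqrt by simp
  have y'G: "y' \<le> \<Gamma>" unfolding y'_def \<Gamma>_def by (rule norm_le_norm1)
  have Ny: "N \<le> aS + y'"
    unfolding NV aS_def y'_def using norm_triangle_ineq[of "rv S v" "rv (-S) v"] by (simp add: rv_split)
  have dom: "\<forall>j\<in>-S. \<bar>v$j\<bar> \<le> aS / sqrt s"
  proof
    fix j assume j: "j \<in> -S"
    have "(\<Sum>i\<in>S. (v$j)^2) \<le> (\<Sum>i\<in>S. (v$i)^2)"
    proof (rule sum_mono)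
      fix i assume "i \<in> S"
      then have "\<bar>v$j\<bar> \<le> \<bar>v$i\<bar>" using Sdom j by auto
      then show "(v$j)^2 \<le> (v$i)^2" by (simp add: abs_le_square_iff)
    qed
    then have "real s * (v$j)^2 \<le> aS^2" unfolding aS_def norm_sq_rv using S(1) by simp
    then have "(v$j)^2 \<le> aS^2 / s" using s by (simp add: le_divide_eq mult.commute)
    then have "sqrt ((v$j)^2) \<le> sqrt (aS^2 / s)" by (rule real_sqrt_le_mono)
    then show "\<bar>v$j\<bar> \<le> aS / sqrt s" using aS0 by (simp add: real_sqrt_divide)
  qed
  have y'sq: "y'^2 \<le> (aS / sqrt s) * \<Gamma>"
  proof -
    have "y'^2 = (\<Sum>j\<in>-S. (v$j)^2)" unfolding y'_def by (rule norm_sq_rv)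
    also have "\<dots> \<le> (\<Sum>j\<in>-S. (aS / sqrt s) * \<bar>v$j\<bar>)"
    proof (rule sum_mono)
      fix j assume "j \<in> -S"
      then have "\<bar>v$j\<bar> \<le> aS / sqrt s" using dom by auto
      then have "\<bar>v$j\<bar> * \<bar>v$j\<bar> \<le> (aS / sqrt s) * \<bar>v$j\<bar>" by (intro mult_right_mono) auto
      then show "(v$j)^2 \<le> (aS / sqrt s) * \<bar>v$j\<bar>" by (simp add: power2_eq_square abs_mult_self)
    qed
    also have "\<dots> = (aS / sqrt s) * \<Gamma>" unfolding \<Gamma>_def norm1_rv by (simp add: sum_distrib_left)
    finally show ?thesis .
  qed
  define g where "g = W + \<eta>"
  have eta0: "\<eta> \<ge> 0" unfolding \<eta>_def by simp
  have g0: "g \<ge> 0" unfolding g_def using W0 eta0 by simp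
  have G: "\<Gamma> \<le> P + \<alpha> * N + g"
  proof -
    have "\<eta>^2 \<ge> 0" by simp
    then have "- lam * \<eta> \<le> lam * (W + P - \<Gamma> + \<alpha> * N)" using E1 by linarith
    then have "lam * (- \<eta>) \<le> lam * (W + P - \<Gamma> + \<alpha> * N)" by simp
    from this lam have "- \<eta> \<le> W + P - \<Gamma> + \<alpha> * N" by (rule mult_left_le_imp_le)
    then show ?thesis unfolding g_def by simp
  qed
  have Gb: "\<Gamma> \<le> sqrt s * aS + \<alpha> * (aS + y') + g"
  proof -
    have "\<alpha> * N \<le> \<alpha> * (aS + y')" using Ny alpha by (intro mult_left_mono) auto
    then show ?thesis using G PaS by linarith
  qed
  have "y'^2 \<le> (aS / sqrt s) * (sqrt s * aS + \<alpha> * (aS + y') + g)"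
  proof -
    have "(aS / sqrt s) * \<Gamma> \<le> (aS / sqrt s) * (sqrt s * aS + \<alpha> * (aS + y') + g)"
      using Gb aS0 sq by (intro mult_left_mono) auto
    then show ?thesis using y'sq by linarith
  qed
  then have Kl: "aS + y' \<le> K0 * aS + g / 2"
    unfolding K0_def by (rule K_lemma[OF y'0 aS0 g0 sq(2) less_imp_le[OF alpha(1)]])
  have R1: "N \<le> K0 * aS + g / 2" using Ny Kl by linarith
  have K00: "K0 \<ge> 0" unfolding K0_def using alpha sq by simp
  have R2: "\<Gamma> \<le> (sqrt s + \<alpha> * K0) * aS + (1 + \<alpha> / 2) * g"
  proof -
    have "\<alpha> * N \<le> \<alpha> * (K0 * aS + g / 2)" using R1 alpha by (intro mult_left_mono) auto
    then show ?thesis using G PaS by (simp add: algebra_simps)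
  qed
  have R3: "\<eta>^2 - lam * \<eta> \<le> lam * (W + (sqrt s + \<alpha>) * aS)"
  proof -
    have "\<alpha> * N \<le> \<alpha> * (aS + \<Gamma>)" using Ny y'G alpha by (intro mult_left_mono) auto
    moreover have "\<alpha> * \<Gamma> \<le> \<Gamma>" using alpha Gam0 by (simp add: mult_left_le_one_le)
    ultimately have "W + P - \<Gamma> + \<alpha> * N \<le> W + (sqrt s + \<alpha>) * aS" using PaS by (simp add: algebra_simps)
    then have "lam * (W + P - \<Gamma> + \<alpha> * N) \<le> lam * (W + (sqrt s + \<alpha>) * aS)" using lam by simp
    then show ?thesis using E1 by linarith
  qed
  show ?thesis
    apply (rule that[of S])
    using S(1) Sdom R1 R2 R3 dom W0
    unfolding v_def[symmetric] \<eta>_def[symmetric] N_def[symmetric] aS_def[symmetric] \<Gamma>_def[symmetric]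
      K0_def[symmetric] g_def
    by auto
qed




lemma part_ii:
  fixes A :: "real^'n^'m" and D :: "real^'d^'n" and \<alpha> lam :: real and s :: nat
    and xh x :: "real^'n" and W K :: real and S :: "'d set"
    and \<delta> \<theta> \<rho> \<tau> C Q :: real
  assumes DDt: "D ** transpose D = mat 1"
    and alpha: "0 < \<alpha>" "\<alpha> \<le> 1" and lam: "lam > 0" and s: "s \<ge> 2" and W0: "W \<ge> 0"
    and K: "K = 2 + (2 * \<alpha> + 1) / (2 * sqrt s)"
    and S: "card S = s"
    and R1: "norm (xh - x) \<le> K * norm (rv S (transpose D *v (xh - x))) + (W + norm (A *v (xh - x))) / 2"
    and R2: "norm1 (rv (-S) (transpose D *v (xh - x))) \<le> (sqrt s + \<alpha> * K) * norm (rv S (transpose D *v (xh - x)))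
        + (1 + \<alpha> / 2) * (W + norm (A *v (xh - x)))"
    and R3: "(norm (A *v (xh - x)))^2 - lam * norm (A *v (xh - x)) \<le> lam * (W + (sqrt s + \<alpha>) * norm (rv S (transpose D *v (xh - x))))"
    and dom: "\<forall>j\<in>-S. \<bar>(transpose D *v (xh - x))$j\<bar> \<le> norm (rv S (transpose D *v (xh - x))) / sqrt s"
    and d: "\<delta> = DRIC A D s" and th: "\<theta> = DROC A D s s"
    and rho: "\<rho> = \<delta> + (sqrt 2 + 1) * (sqrt s + \<alpha>) / (sqrt 2 * (sqrt s - 1)) * \<theta>"
    and tau: "\<tau> = (sqrt 2 + 1) * \<theta> / (sqrt 2 * (1 - \<rho>)) * (1 / (sqrt s - 1))"
    and C: "C = 1 + (sqrt 2 + 1) * \<theta> / (sqrt 2 * (1 - \<rho>)) * ((sqrt s + \<alpha>) / (sqrt s - 1))"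
    and Q: "Q = C * (1 - \<rho>) + (sqrt s + \<alpha>) * sqrt (1 + \<delta>)"
    and rho1: "\<rho> < 1"
  shows "norm (xh - x) \<le> err_bound s \<alpha> lam K W \<rho> \<delta> \<tau> C Q"
proof -
  define v where "v = transpose D *v (xh - x)"
  define \<eta> where "\<eta> = norm (A *v (xh - x))"
  define aS where "aS = norm (rv S v)"
  define \<Gamma> where "\<Gamma> = norm1 (rv (-S) v)"
  define g where "g = W + \<eta>"
  define r where "r = sqrt (real s)"
  have r2: "r \<ge> sqrt 2" unfolding r_def using s by simp
  then have r75: "r \<ge> 7/5" using sqrt2_bounds by linarith
  have r0: "r > 0" "r - 1 > 0" using r75 by auto
  have d0: "\<delta> \<ge> 0" unfolding d using DRIC_props(1)[OF DDt] .
  have t0: "\<theta> \<ge> 0" unfolding th using DROC_props(1)[OF DDt] .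
  have eta0: "\<eta> \<ge> 0" unfolding \<eta>_def by simp
  have g0: "g \<ge> 0" unfolding g_def using W0 eta0 by simp
  have aS0: "aS \<ge> 0" unfolding aS_def by simp
  have K0: "K \<ge> 0" unfolding K using alpha r0 r_def by simp
  have rip: "(1 - \<delta>) * aS \<le> sqrt (1 + \<delta>) * \<eta> + \<theta> * (\<Gamma> / r + r * (aS / r) / 4)"
    using rip_step[where H=S and kH=s and k=s and M="aS / r" and A=A and h="xh - x", OF DDt] S s dom aS0 r0
    unfolding d th aS_def \<Gamma>_def v_def \<eta>_def r_def by simp
  have "\<Gamma> / r + r * (aS / r) / 4 \<le> (5/4 + \<alpha> * K / r) * aS + ((1 + \<alpha> / 2) / r) * g"
  proof -
    have "\<Gamma> / r \<le> ((r + \<alpha> * K) * aS + (1 + \<alpha> / 2) * g) / r"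
      using R2 r0 unfolding \<Gamma>_def aS_def g_def v_def \<eta>_def r_def by (simp add: divide_right_mono)
    also have "\<dots> = (1 + \<alpha> * K / r) * aS + ((1 + \<alpha> / 2) / r) * g" using r0 by (simp add: field_simps)
    finally show ?thesis using r0 by (simp add: algebra_simps)
  qed
  then have "\<theta> * (\<Gamma> / r + r * (aS / r) / 4) \<le> \<theta> * ((5/4 + \<alpha> * K / r) * aS + ((1 + \<alpha> / 2) / r) * g)"
    using t0 by (intro mult_left_mono) auto
  with rip have rip2: "(1 - \<delta>) * aS \<le> sqrt (1 + \<delta>) * \<eta> + \<theta> * ((5/4 + \<alpha> * K / r) * aS + ((1 + \<alpha> / 2) / r) * g)"
    by linarith
  have Z1: "(sqrt 2 + 1) * (r + \<alpha>) / (sqrt 2 * (r - 1)) \<ge> 5/4 + \<alpha> * K / r"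
    using const_ii_a[OF r75 alpha] unfolding K r_def .
  have rhoge: "\<rho> \<ge> \<delta> + \<theta> * (5/4 + \<alpha> * K / r)"
  proof -
    have "\<theta> * (5/4 + \<alpha> * K / r) \<le> \<theta> * ((sqrt 2 + 1) * (r + \<alpha>) / (sqrt 2 * (r - 1)))"
      using Z1 t0 by (intro mult_left_mono) auto
    then show ?thesis unfolding rho r_def by (simp add: mult.commute)
  qed
  have r1: "1 - \<rho> > 0" using rho1 by simp
  have taueq: "\<tau> = \<theta> / (1 - \<rho>) * ((sqrt 2 + 1) / (sqrt 2 * (r - 1)))"
    unfolding tau r_def by (simp add: field_simps)
  have tauge: "\<tau> \<ge> \<theta> * ((1 + \<alpha> / 2) / r) / (1 - \<rho>)"
  proof -
    have "\<theta> / (1 - \<rho>) * ((1 + \<alpha> / 2) / r) \<le> \<theta> / (1 - \<rho>) * ((sqrt 2 + 1) / (sqrt 2 * (r - 1)))"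
      using const_ii_b[OF r75 alpha] t0 r1 by (intro mult_left_mono) auto
    then show ?thesis unfolding taueq by (simp add: field_simps)
  qed
  have abd: "aS \<le> \<tau> * g + sqrt (1 + \<delta>) / (1 - \<rho>) * \<eta>"
    by (rule a_bound[OF rip2 aS0 g0 t0 rhoge rho1 tauge])
  have tau0: "\<tau> \<ge> 0" unfolding taueq using t0 r1 r0 by simp
  have Ceq: "C = 1 + (sqrt s + \<alpha>) * \<tau>" unfolding C tau by (simp add: field_simps)
  show ?thesis
  proof (rule final_chain[where a = aS and g = g and \<eta> = \<eta> and P = "sqrt s + \<alpha>" and c = "sqrt (1 + \<delta>) / (1 - \<rho>)"])
    show "norm (xh - x) \<le> K * aS + g / 2" using R1 unfolding aS_def g_def v_def \<eta>_def .
    show "aS \<le> \<tau> * g + sqrt (1 + \<delta>) / (1 - \<rho>) * \<eta>" by (rule abd)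
    show "\<eta>^2 - lam * \<eta> \<le> lam * (W + (sqrt s + \<alpha>) * aS)" using R3 unfolding aS_def v_def \<eta>_def .
  qed (use alpha Ceq Q rho1 d0 K0 tau0 W0 lam eta0 g_def in auto)
qed

lemma norm_rv_mono: "S \<subseteq> H \<Longrightarrow> norm (rv S v) \<le> norm (rv H v)"
proof -
  assume SH: "S \<subseteq> H"
  have "(norm (rv S v))^2 \<le> (norm (rv H v))^2"
    unfolding norm_sq_rv using SH by (intro sum_mono2) auto
  then show ?thesis by (rule power2_le_imp_le) simp
qed

lemma part_i:
  fixes A :: "real^'n^'m" and D :: "real^'d^'n" and \<alpha> lam t :: real and s :: nat
    and xh x :: "real^'n" and W K :: real and S :: "'d set"
    and \<delta> \<theta> \<rho> \<tau> C Q :: real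
  assumes DDt: "D ** transpose D = mat 1"
    and alpha: "0 < \<alpha>" "\<alpha> \<le> 1" and lam: "lam > 0" and s: "s \<ge> 2" and W0: "W \<ge> 0"
    and K: "K = 2 + (2 * \<alpha> + 1) / (2 * sqrt s)"
    and S: "card S = s"
    and R1: "norm (xh - x) \<le> K * norm (rv S (transpose D *v (xh - x))) + (W + norm (A *v (xh - x))) / 2"
    and R2: "norm1 (rv (-S) (transpose D *v (xh - x))) \<le> (sqrt s + \<alpha> * K) * norm (rv S (transpose D *v (xh - x)))
        + (1 + \<alpha> / 2) * (W + norm (A *v (xh - x)))"
    and R3: "(norm (A *v (xh - x)))^2 - lam * norm (A *v (xh - x)) \<le> lam * (W + (sqrt s + \<alpha>) * norm (rv S (transpose D *v (xh - x))))"
    and t: "t \<ge> 3"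
    and d: "\<delta> = DRIC A D (nat \<lceil>t * s\<rceil>)" and th: "\<theta> = DROC A D (nat \<lceil>t * s\<rceil>) (nat \<lceil>(t - 1) * s\<rceil>)"
    and rho: "\<rho> = \<delta> + sqrt (real_of_int \<lceil>(t - 1) * s\<rceil> / ((t - 1)^2 * s))
                   * ((sqrt 2 + 1) * (sqrt s + \<alpha>) / (sqrt 2 * (sqrt s - 1))) * \<theta>"
    and tau: "\<tau> = (sqrt 2 + 1) * \<theta> / (sqrt 2 * (1 - \<rho>))
                     * (sqrt ((t - 1) * s) / ((t - 1) * (s - sqrt s)))"
    and C: "C = 1 + (sqrt 2 + 1) * \<theta> / (sqrt 2 * (1 - \<rho>))
                     * ((sqrt s + \<alpha>) / (s - sqrt s)) * (sqrt ((t - 1) * s) / (t - 1))"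
    and Q: "Q = C * (1 - \<rho>) + (sqrt s + \<alpha>) * sqrt (1 + \<delta>)"
    and rho1: "\<rho> < 1"
  shows "norm (xh - x) \<le> err_bound s \<alpha> lam K W \<rho> \<delta> \<tau> C Q"
proof -
  define v where "v = transpose D *v (xh - x)"
  define \<eta> where "\<eta> = norm (A *v (xh - x))"
  define aS where "aS = norm (rv S v)"
  define \<Gamma> where "\<Gamma> = norm1 (rv (-S) v)"
  define g where "g = W + \<eta>"
  define r where "r = sqrt (real s)"
  define k where "k = nat \<lceil>(t - 1) * s\<rceil>"
  have r2: "r \<ge> sqrt 2" unfolding r_def using s by simp
  then have r75: "r \<ge> 7/5" using sqrt2_bounds by linarith
  have r0: "r > 0" "r - 1 > 0" using r75 by auto
  have t1: "t - 1 > 0" using t by simp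
  have ts0: "(t - 1) * real s > 0" using t1 s by simp
  have ceil0: "\<lceil>(t - 1) * real s\<rceil> \<ge> 0" using ts0 by (simp add: less_imp_le)
  have kr: "real k = real_of_int \<lceil>(t - 1) * s\<rceil>" unfolding k_def using ceil0 by simp
  have kge: "real k \<ge> (t - 1) * s" unfolding kr by simp
  have kpos: "k > 0" using kge ts0 by simp
  have nts: "nat \<lceil>t * s\<rceil> = s + k"
  proof -
    have "t * real s = (t - 1) * real s + real_of_int (int s)" by (simp add: algebra_simps)
    then have "\<lceil>t * real s\<rceil> = \<lceil>(t - 1) * real s\<rceil> + int s" by (simp only: ceiling_add_of_int)
    then show ?thesis unfolding k_def using ceil0 by (simp add: nat_add_distrib)
  qed
  have d0: "\<delta> \<ge> 0" unfolding d using DRIC_props(1)[OF DDt] .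
  have t0: "\<theta> \<ge> 0" unfolding th using DROC_props(1)[OF DDt] .
  have eta0: "\<eta> \<ge> 0" unfolding \<eta>_def by simp
  have g0: "g \<ge> 0" unfolding g_def using W0 eta0 by simp
  have aS0: "aS \<ge> 0" unfolding aS_def by simp
  have K0: "K \<ge> 0" unfolding K using alpha r0 r_def by simp
  have Gam0: "\<Gamma> \<ge> 0" unfolding \<Gamma>_def by (rule norm1_nonneg)
  have sk: "sqrt (real k) > 0" using kpos by simp
  have skk: "sqrt (real k) * sqrt (real k) = real k" by simp
  obtain H where H: "S \<subseteq> H" "(1 - \<delta>) * norm (rv H v) \<le> sqrt (1 + \<delta>) * \<eta> + \<theta> * (\<Gamma> / sqrt k)"
  proof (cases "k \<le> card (-S)")
    case True
    then obtain B1 where B1: "B1 \<subseteq> -S" "card B1 = k" "\<forall>i\<in>B1. \<forall>j\<in>-S-B1. \<bar>v$j\<bar> \<le> \<bar>v$i\<bar>"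
      using exists_top[of k "-S" "\<lambda>i. v$i"] by auto
    define H where "H = S \<union> B1"
    define n1 where "n1 = norm1 (rv B1 v)"
    have n10: "n1 \<ge> 0" unfolding n1_def by (rule norm1_nonneg)
    have cardH: "card H = s + k" unfolding H_def using B1 S by (subst card_Un_disjoint) auto
    have mH: "-H = -S - B1" unfolding H_def by auto
    have Mb: "\<forall>j\<in>-H. \<bar>v$j\<bar> \<le> n1 / k"
    proof
      fix j assume j: "j \<in> -H"
      have "(\<Sum>i\<in>B1. \<bar>v$j\<bar>) \<le> (\<Sum>i\<in>B1. \<bar>v$i\<bar>)"
        by (rule sum_mono) (use B1(3) j mH in auto)
      then have "real k * \<bar>v$j\<bar> \<le> n1" unfolding n1_def norm1_rv using B1(2) by simp
      then show "\<bar>v$j\<bar> \<le> n1 / k" using kpos by (simp add: le_divide_eq mult.commute)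
    qed
    have rip: "(1 - \<delta>) * norm (rv H v) \<le> sqrt (1 + \<delta>) * \<eta> +
        \<theta> * (norm1 (rv (-H) v) / sqrt k + sqrt k * (n1 / k) / 4)"
      using rip_step[where H=H and kH="s + k" and k=k and M="n1 / k" and A=A and h="xh - x", OF DDt] cardH kpos n10 Mb
      unfolding d th nts k_def[symmetric] v_def \<eta>_def by simp
    have n1H: "norm1 (rv (-H) v) = \<Gamma> - n1"
    proof -
      have "\<Gamma> = (\<Sum>i\<in>-S. \<bar>v$i\<bar>)" unfolding \<Gamma>_def norm1_rv ..
      also have "\<dots> = (\<Sum>i\<in>-S - B1. \<bar>v$i\<bar>) + (\<Sum>i\<in>B1. \<bar>v$i\<bar>)"
        using B1(1) by (simp add: sum.subset_diff)
      finally show ?thesis unfolding mH n1_def norm1_rv by simp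
    qed
    have "norm1 (rv (-H) v) / sqrt k + sqrt k * (n1 / k) / 4 = (\<Gamma> - n1) / sqrt k + n1 / (4 * sqrt k)"
      unfolding n1H using sk skk by (simp add: field_simps)
    also have "\<dots> \<le> \<Gamma> / sqrt k" using n10 sk by (simp add: field_simps)
    finally have "\<theta> * (norm1 (rv (-H) v) / sqrt k + sqrt k * (n1 / k) / 4) \<le> \<theta> * (\<Gamma> / sqrt k)"
      using t0 by (intro mult_left_mono) auto
    with rip have "(1 - \<delta>) * norm (rv H v) \<le> sqrt (1 + \<delta>) * \<eta> + \<theta> * (\<Gamma> / sqrt k)" by linarith
    then show ?thesis using that[of H] unfolding H_def by auto
  next
    case False
    have cardU: "card (UNIV :: 'd set) \<le> s + k"
    proof -
      have "card (UNIV :: 'd set) = card S + card (-S)"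
        by (metis Compl_partition card_Un_disjoint finite Compl_disjoint)
      then show ?thesis using S False by simp
    qed
    have rip: "(1 - \<delta>) * norm (rv UNIV v) \<le> sqrt (1 + \<delta>) * \<eta> +
        \<theta> * (norm1 (rv (-UNIV) v) / sqrt k + sqrt k * 0 / 4)"
      using rip_step[where H=UNIV and kH="s + k" and k=k and M=0 and A=A and h="xh - x", OF DDt] cardU kpos
      unfolding d th nts k_def[symmetric] v_def \<eta>_def by simp
    have "norm1 (rv (-UNIV) v) = 0" unfolding norm1_rv by simp
    moreover have "\<theta> * (\<Gamma> / sqrt k) \<ge> 0" using t0 Gam0 sk by simp
    ultimately have "(1 - \<delta>) * norm (rv UNIV v) \<le> sqrt (1 + \<delta>) * \<eta> + \<theta> * (\<Gamma> / sqrt k)" using rip by simp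
    then show ?thesis using that[of UNIV] by auto
  qed
  define aH where "aH = norm (rv H v)"
  have aH0: "aH \<ge> 0" unfolding aH_def by simp
  have aSH: "aS \<le> aH" unfolding aS_def aH_def by (rule norm_rv_mono[OF H(1)])
  have rKn: "r + \<alpha> * K \<ge> 0" using r0 alpha K0 by simp
  have Gb: "\<Gamma> \<le> (r + \<alpha> * K) * aH + (1 + \<alpha> / 2) * g"
  proof -
    have "(r + \<alpha> * K) * aS \<le> (r + \<alpha> * K) * aH" using aSH rKn by (intro mult_left_mono) auto
    then show ?thesis using R2 unfolding \<Gamma>_def aS_def g_def v_def \<eta>_def r_def by linarith
  qed
  have "\<Gamma> / sqrt k \<le> ((r + \<alpha> * K) / sqrt k) * aH + ((1 + \<alpha> / 2) / sqrt k) * g"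
  proof -
    have "\<Gamma> / sqrt k \<le> ((r + \<alpha> * K) * aH + (1 + \<alpha> / 2) * g) / sqrt k"
      using Gb sk by (simp add: divide_right_mono)
    also have "\<dots> = ((r + \<alpha> * K) / sqrt k) * aH + ((1 + \<alpha> / 2) / sqrt k) * g" using sk by (simp add: field_simps)
    finally show ?thesis .
  qed
  then have "\<theta> * (\<Gamma> / sqrt k) \<le> \<theta> * (((r + \<alpha> * K) / sqrt k) * aH + ((1 + \<alpha> / 2) / sqrt k) * g)"
    using t0 by (intro mult_left_mono) auto
  with H(2) have rip2: "(1 - \<delta>) * aH \<le> sqrt (1 + \<delta>) * \<eta> + \<theta> * (((r + \<alpha> * K) / sqrt k) * aH + ((1 + \<alpha> / 2) / sqrt k) * g)"
    unfolding aH_def by linarith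
  have rhoge: "\<rho> \<ge> \<delta> + \<theta> * ((r + \<alpha> * K) / sqrt k)"
  proof -
    have "sqrt (real k / ((t - 1)^2 * s)) * ((sqrt 2 + 1) * (r + \<alpha>) / (sqrt 2 * (r - 1))) \<ge> (r + \<alpha> * K) / sqrt k"
      using const_i_a[OF r_def _ alpha t kge] s unfolding K r_def by simp
    then have "\<theta> * ((r + \<alpha> * K) / sqrt k) \<le> \<theta> * (sqrt (real k / ((t - 1)^2 * s)) * ((sqrt 2 + 1) * (r + \<alpha>) / (sqrt 2 * (r - 1))))"
      using t0 by (intro mult_left_mono) auto
    then show ?thesis unfolding rho kr[symmetric] r_def by (simp add: mult.commute mult.left_commute)
  qed
  have r1: "1 - \<rho> > 0" using rho1 by simp
  have taueq: "\<tau> = \<theta> / (1 - \<rho>) * (sqrt ((t - 1) * s) / ((t - 1) * (s - r)) * ((sqrt 2 + 1) / sqrt 2))"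
    unfolding tau r_def by (simp add: field_simps)
  have Fpos: "sqrt ((t - 1) * s) / ((t - 1) * (s - r)) * ((sqrt 2 + 1) / sqrt 2) \<ge> (1 + \<alpha> / 2) / sqrt k"
    by (rule const_i_b[OF r_def _ alpha t kge]) (use s in simp)
  have tauge: "\<tau> \<ge> \<theta> * ((1 + \<alpha> / 2) / sqrt k) / (1 - \<rho>)"
  proof -
    have "\<theta> / (1 - \<rho>) * ((1 + \<alpha> / 2) / sqrt k) \<le> \<theta> / (1 - \<rho>) * (sqrt ((t - 1) * s) / ((t - 1) * (s - r)) * ((sqrt 2 + 1) / sqrt 2))"
      using Fpos t0 r1 by (intro mult_left_mono) auto
    then show ?thesis unfolding taueq by (simp add: field_simps)
  qed
  have abd: "aH \<le> \<tau> * g + sqrt (1 + \<delta>) / (1 - \<rho>) * \<eta>"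
    by (rule a_bound[OF rip2 aH0 g0 t0 rhoge rho1 tauge])
  have tau0: "\<tau> \<ge> 0"
  proof -
    have "(1 + \<alpha> / 2) / sqrt k \<ge> 0" using alpha sk by simp
    then have "\<theta> * ((1 + \<alpha> / 2) / sqrt k) \<ge> 0" by (rule mult_nonneg_nonneg[OF t0])
    then have "\<theta> * ((1 + \<alpha> / 2) / sqrt k) / (1 - \<rho>) \<ge> 0" using r1 by (intro divide_nonneg_pos) auto
    then show ?thesis using tauge by linarith
  qed
  have Ceq: "C = 1 + (sqrt s + \<alpha>) * \<tau>" unfolding C tau by (simp add: field_simps)
  show ?thesis
  proof (rule final_chain[where a = aH and g = g and \<eta> = \<eta> and P = "sqrt s + \<alpha>" and c = "sqrt (1 + \<delta>) / (1 - \<rho>)"])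
    have "K * aS \<le> K * aH" using aSH K0 by (intro mult_left_mono) auto
    then show "norm (xh - x) \<le> K * aH + g / 2" using R1 unfolding aS_def g_def v_def \<eta>_def by linarith
    show "aH \<le> \<tau> * g + sqrt (1 + \<delta>) / (1 - \<rho>) * \<eta>" by (rule abd)
    have "(sqrt s + \<alpha>) * aS \<le> (sqrt s + \<alpha>) * aH" using aSH alpha by (intro mult_left_mono) auto
    then have "lam * (W + (sqrt s + \<alpha>) * aS) \<le> lam * (W + (sqrt s + \<alpha>) * aH)" using lam by simp
    then show "\<eta>^2 - lam * \<eta> \<le> lam * (W + (sqrt s + \<alpha>) * aH)" using R3 unfolding aS_def v_def \<eta>_def by linarith
  qed (use alpha Ceq Q rho1 d0 K0 tau0 W0 lam eta0 g_def in auto)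
qed


theorem theorem2:
  fixes A :: "real^'n^'m" and D :: "real^'d^'n"
    and \<alpha> lam \<mu> :: real and s :: nat
    and x :: "real^'n" and e :: "real^'m" and b :: "real^'m"
    and T :: "'d set" and xh :: "real^'n" and zh :: "real^'d"
    and K W :: real
  assumes DDt: "D ** transpose D = mat 1"
    and alpha: "0 < \<alpha>" "\<alpha> \<le> 1"
    and lam: "lam > 0" and mu: "\<mu> > 0"
    and s: "s \<ge> 2"
    and b: "b = A *v x + e" and e: "norm e \<le> lam"
    and Tcard: "card T = s"
    and Tlargest: "\<forall>i\<in>T. \<forall>j. j \<notin> T \<longrightarrow> \<bar>(transpose D *v x) $ j\<bar> \<le> \<bar>(transpose D *v x) $ i\<bar>"
    and minimizer: "\<forall>x' z'. objective lam \<alpha> \<mu> A D b xh zh \<le> objective lam \<alpha> \<mu> A D b x' z'"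
    and K_def: "K = sqrt ((\<alpha> + sqrt s) / sqrt s + \<alpha>^2 / (4 * s)) + (\<alpha> + 1) / (2 * sqrt s) + 1"
    and W_def: "W = 2 * norm1 (transpose (Dcols (- T) D) *v x)
                    + (\<alpha> + 1)^2 * real CARD('d) / 2 * (lam / \<mu>)"
  shows
    "(\<forall>t::real. t \<ge> 3 \<longrightarrow>
       (let \<delta> = DRIC A D (nat \<lceil>t * s\<rceil>);
            \<theta> = DROC A D (nat \<lceil>t * s\<rceil>) (nat \<lceil>(t - 1) * s\<rceil>);
            \<rho> = \<delta> + sqrt (real_of_int \<lceil>(t - 1) * s\<rceil> / ((t - 1)^2 * s))
                   * ((sqrt 2 + 1) * (sqrt s + \<alpha>) / (sqrt 2 * (sqrt s - 1))) * \<theta>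
        in \<rho> < 1 \<longrightarrow>
          (let \<tau> = (sqrt 2 + 1) * \<theta> / (sqrt 2 * (1 - \<rho>))
                     * (sqrt ((t - 1) * s) / ((t - 1) * (s - sqrt s)));
               C = 1 + (sqrt 2 + 1) * \<theta> / (sqrt 2 * (1 - \<rho>))
                     * ((sqrt s + \<alpha>) / (s - sqrt s)) * (sqrt ((t - 1) * s) / (t - 1));
               Q = C * (1 - \<rho>) + (sqrt s + \<alpha>) * sqrt (1 + \<delta>)
           in norm (xh - x) \<le> err_bound s \<alpha> lam K W \<rho> \<delta> \<tau> C Q)))
     \<and>
     (let \<delta> = DRIC A D s;
          \<theta> = DROC A D s s;
          \<rho> = \<delta> + (sqrt 2 + 1) * (sqrt s + \<alpha>) / (sqrt 2 * (sqrt s - 1)) * \<theta>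
      in \<rho> < 1 \<longrightarrow>
        (let \<tau> = (sqrt 2 + 1) * \<theta> / (sqrt 2 * (1 - \<rho>)) * (1 / (sqrt s - 1));
             C = 1 + (sqrt 2 + 1) * \<theta> / (sqrt 2 * (1 - \<rho>)) * ((sqrt s + \<alpha>) / (sqrt s - 1));
             Q = C * (1 - \<rho>) + (sqrt s + \<alpha>) * sqrt (1 + \<delta>)
         in norm (xh - x) \<le> err_bound s \<alpha> lam K W \<rho> \<delta> \<tau> C Q))"
proof -
  have K0: "K = 2 + (2 * \<alpha> + 1) / (2 * sqrt s)"
    using K_def K_simp[of "real s" \<alpha>] s alpha by simp
  obtain S where S: "card S = s" "\<forall>i\<in>S. \<forall>j\<in>-S. \<bar>(transpose D *v (xh - x))$j\<bar> \<le> \<bar>(transpose D *v (xh - x))$i\<bar>"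
    "norm (xh - x) \<le> (2 + (2 * \<alpha> + 1) / (2 * sqrt s)) * norm (rv S (transpose D *v (xh - x)))
        + (W + norm (A *v (xh - x))) / 2"
    "norm1 (rv (-S) (transpose D *v (xh - x))) \<le> (sqrt s + \<alpha> * (2 + (2 * \<alpha> + 1) / (2 * sqrt s))) * norm (rv S (transpose D *v (xh - x)))
        + (1 + \<alpha> / 2) * (W + norm (A *v (xh - x)))"
    "(norm (A *v (xh - x)))^2 - lam * norm (A *v (xh - x)) \<le> lam * (W + (sqrt s + \<alpha>) * norm (rv S (transpose D *v (xh - x))))"
    "\<forall>j\<in>-S. \<bar>(transpose D *v (xh - x))$j\<bar> \<le> norm (rv S (transpose D *v (xh - x))) / sqrt s"
    "W \<ge> 0"
    by (rule common[OF DDt alpha lam mu s b e Tcard minimizer W_def])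
  note R1 = S(3)[folded K0] and R2 = S(4)[folded K0] and R3 = S(5) and dom = S(6) and W0 = S(7)
  show ?thesis
  proof
    show "\<forall>t::real. t \<ge> 3 \<longrightarrow>
       (let \<delta> = DRIC A D (nat \<lceil>t * s\<rceil>);
            \<theta> = DROC A D (nat \<lceil>t * s\<rceil>) (nat \<lceil>(t - 1) * s\<rceil>);
            \<rho> = \<delta> + sqrt (real_of_int \<lceil>(t - 1) * s\<rceil> / ((t - 1)^2 * s))
                   * ((sqrt 2 + 1) * (sqrt s + \<alpha>) / (sqrt 2 * (sqrt s - 1))) * \<theta>
        in \<rho> < 1 \<longrightarrow>
          (let \<tau> = (sqrt 2 + 1) * \<theta> / (sqrt 2 * (1 - \<rho>))
                     * (sqrt ((t - 1) * s) / ((t - 1) * (s - sqrt s)));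
               C = 1 + (sqrt 2 + 1) * \<theta> / (sqrt 2 * (1 - \<rho>))
                     * ((sqrt s + \<alpha>) / (s - sqrt s)) * (sqrt ((t - 1) * s) / (t - 1));
               Q = C * (1 - \<rho>) + (sqrt s + \<alpha>) * sqrt (1 + \<delta>)
           in norm (xh - x) \<le> err_bound s \<alpha> lam K W \<rho> \<delta> \<tau> C Q))"
    proof (intro allI impI)
      fix t :: real assume t: "t \<ge> 3"
      show "let \<delta> = DRIC A D (nat \<lceil>t * s\<rceil>);
            \<theta> = DROC A D (nat \<lceil>t * s\<rceil>) (nat \<lceil>(t - 1) * s\<rceil>);
            \<rho> = \<delta> + sqrt (real_of_int \<lceil>(t - 1) * s\<rceil> / ((t - 1)^2 * s))
                   * ((sqrt 2 + 1) * (sqrt s + \<alpha>) / (sqrt 2 * (sqrt s - 1))) * \<theta>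
        in \<rho> < 1 \<longrightarrow>
          (let \<tau> = (sqrt 2 + 1) * \<theta> / (sqrt 2 * (1 - \<rho>))
                     * (sqrt ((t - 1) * s) / ((t - 1) * (s - sqrt s)));
               C = 1 + (sqrt 2 + 1) * \<theta> / (sqrt 2 * (1 - \<rho>))
                     * ((sqrt s + \<alpha>) / (s - sqrt s)) * (sqrt ((t - 1) * s) / (t - 1));
               Q = C * (1 - \<rho>) + (sqrt s + \<alpha>) * sqrt (1 + \<delta>)
           in norm (xh - x) \<le> err_bound s \<alpha> lam K W \<rho> \<delta> \<tau> C Q)"
        unfolding Let_def
        using part_i[OF DDt alpha lam s W0 K0 S(1) R1 R2 R3 t refl refl refl refl refl refl] by blast
    qed
  next
    show "let \<delta> = DRIC A D s;
          \<theta> = DROC A D s s;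
          \<rho> = \<delta> + (sqrt 2 + 1) * (sqrt s + \<alpha>) / (sqrt 2 * (sqrt s - 1)) * \<theta>
      in \<rho> < 1 \<longrightarrow>
        (let \<tau> = (sqrt 2 + 1) * \<theta> / (sqrt 2 * (1 - \<rho>)) * (1 / (sqrt s - 1));
             C = 1 + (sqrt 2 + 1) * \<theta> / (sqrt 2 * (1 - \<rho>)) * ((sqrt s + \<alpha>) / (sqrt s - 1));
             Q = C * (1 - \<rho>) + (sqrt s + \<alpha>) * sqrt (1 + \<delta>)
         in norm (xh - x) \<le> err_bound s \<alpha> lam K W \<rho> \<delta> \<tau> C Q)"
      unfolding Let_def
      using part_ii[OF DDt alpha lam s W0 K0 S(1) R1 R2 R3 dom refl refl refl refl refl refl] by blast
  qed
qed

end
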